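(* Under the standing assumptions below, let $q,r\in[1,\infty]$ be the exponents from these assumptions and let $p\in\{q\}\cup(\min(q,r),\max(q,r))$. Then $S:X\to Y$ with the differential $\partial_B^{sw}S:X\rightrightarrows\mathcal{L}(X,Y)$ is Newton differentiable w.r.t. perturbations in $U$ with values in $L^p(\Omega)$, i.e., for every $x\in X$, $$\sup_{G\in\partial_B^{sw}S(x+z)}\frac{\|S(x+z)-S(x)-Gz\|_{L^p(\Omega)}}{\|z\|_U}\to0\quad\text{as } z\in U\setminus\{0\},\ \|z\|_U\to0.$$
   Context: Standing assumptions: $(\Omega,\Sigma,\mu)$ is a complete measure space with real Lebesgue spaces $L^p(\Omega)$, $p\in[1,\infty]$. $Y$ is a real separable reflexive Banach space with $Y\subset L^q(\Omega)$ and the inclusion $Y\hookrightarrow L^q(\Omega)$ continuous and compact, for a fixed $q\in[1,\infty]$. $X$ is a real separable Banach space. $U$ is a real reflexive Banach space with $U\subset X$ and the inclusion $U\hookrightarrow X$ continuous and compact. The map $S:X\to Y$ satisfies $S(\lambda x_1+(1-\lambda)x_2)\le\lambda S(x_1)+(1-\lambda)S(x_2)$ $\mu$-a.e. in $\Omega$ for all $x_1,x_2\in X$, $\lambda\in[0,1]$; and there is an exponent $r\in[1,\infty]$ such that for every $x\in X$ there are $C,\varepsilon>0$ with $\|S(x_1)-S(x_2)\|_Y\le C\|x_1-x_2\|_X$ for all $x_1,x_2\in X$ with $\|x_i-x\|_X\le\varepsilon$, $i=1,2$, and $\|S(x_1+z)-S(x_1)\|_{L^r(\Omega)}\le C\|z\|_U$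 for all $x_1\in X$, $z\in U$ with $\|x_1-x\|_X\le\varepsilon$, $\|z\|_U\le\varepsilon$. $S$ is Gâteaux differentiable at $x\in X$ if for all $z\in X$ the limit $S'(x;z):=\lim_{t\to0^+}(S(x+tz)-S(x))/t$ exists in $Y$ and $z\mapsto S'(x;z)$ is linear and continuous; then $S'(x):=S'(x;\cdot)\in\mathcal{L}(X,Y)$. $\mathcal{D}_S$ denotes the set of points where $S$ is Gâteaux differentiable. WOT convergence $G_n\to G$ in $\mathcal{L}(X,Y)$ means $G_nz\rightharpoonup Gz$ weakly in $Y$ for all $z\in X$. The strong-weak Bouligand differential is $\partial_B^{sw}S(x):=\{G\in\mathcal{L}(X,Y): \exists\{x_n\}\subset\mathcal{D}_S \text{ with } x_n\to x \text{ in } X \text{ and } S'(x_n)\to G \text{ in the WOT}\}$. *)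

theory Defs
  imports "HOL-Analysis.Analysis" "HOL-Probability.Essential_Supremum"
begin

definition Lpnorm :: "'w measure \<Rightarrow> ennreal \<Rightarrow> ('w \<Rightarrow> real) \<Rightarrow> ennreal" where
  "Lpnorm M p f =
     (if p = \<infinity> then esssup M (\<lambda>\<omega>. ennreal \<bar>f \<omega>\<bar>)
      else (let I = (\<integral>\<^sup>+ \<omega>. ennreal (\<bar>f \<omega>\<bar> powr enn2real p) \<partial>M)
            in if I = \<infinity> then \<infinity> else ennreal (enn2real I powr (1 / enn2real p))))"

definition separable_nv :: "'a::real_normed_vector itself \<Rightarrow> bool" where
  "separable_nv _ \<longleftrightarrow> (\<exists>D::'a set. countable D \<and> closure D = UNIV)"

definition reflexive_nv :: "'a::real_normed_vector itself \<Rightarrow> bool" where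
  "reflexive_nv _ \<longleftrightarrow>
     (\<forall>\<phi> :: ('a \<Rightarrow>\<^sub>L real) \<Rightarrow>\<^sub>L real. \<exists>y::'a. \<forall>f. blinfun_apply \<phi> f = blinfun_apply f y)"

definition weakly_tendsto :: "(nat \<Rightarrow> 'a::real_normed_vector) \<Rightarrow> 'a \<Rightarrow> bool" where
  "weakly_tendsto ys y \<longleftrightarrow>
     (\<forall>f :: 'a \<Rightarrow>\<^sub>L real. (\<lambda>n. blinfun_apply f (ys n)) \<longlonglongrightarrow> blinfun_apply f y)"

text \<open>J realises Y as a subspace of L^q(M) (elements = a.e.-classes), with continuous and
  compact inclusion.\<close>
definition compact_Lp_embedding ::
  "'w measure \<Rightarrow> ennreal \<Rightarrow> ('y::real_normed_vector \<Rightarrow> 'w \<Rightarrow> real) \<Rightarrow> bool" where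
  "compact_Lp_embedding M q J \<longleftrightarrow>
     (\<forall>y. J y \<in> borel_measurable M) \<and>
     (\<forall>(a::real) (y::'y) y'. AE \<omega> in M. J (a *\<^sub>R y + y') \<omega> = a * J y \<omega> + J y' \<omega>) \<and>
     (\<forall>y. (AE \<omega> in M. J y \<omega> = 0) \<longrightarrow> y = 0) \<and>
     (\<exists>C::real. \<forall>y. Lpnorm M q (J y) \<le> ennreal (C * norm y)) \<and>
     (\<forall>ys::nat \<Rightarrow> 'y. bounded (range ys) \<longrightarrow>
        (\<exists>(\<sigma>::nat \<Rightarrow> nat) (f::'w \<Rightarrow> real). strict_mono \<sigma> \<and> f \<in> borel_measurable M \<and> Lpnorm M q f < \<infinity> \<and>
               (\<lambda>n. Lpnorm M q (\<lambda>\<omega>. J (ys (\<sigma> n)) \<omega> - f \<omega>)) \<longlonglongrightarrow> 0))"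

definition compact_embedding :: "('u::real_normed_vector \<Rightarrow> 'x::real_normed_vector) \<Rightarrow> bool" where
  "compact_embedding E \<longleftrightarrow> bounded_linear E \<and> inj E \<and>
     (\<forall>us::nat \<Rightarrow> 'u. bounded (range us) \<longrightarrow> (\<exists>(\<sigma>::nat \<Rightarrow> nat) (l::'x). strict_mono \<sigma> \<and> (\<lambda>n. E (us (\<sigma> n))) \<longlonglongrightarrow> l))"

definition gateaux_deriv :: "('x::real_normed_vector \<Rightarrow> 'y::real_normed_vector) \<Rightarrow> 'x \<Rightarrow> ('x \<Rightarrow>\<^sub>L 'y) \<Rightarrow> bool" where
  "gateaux_deriv S x G \<longleftrightarrow>
     (\<forall>z. ((\<lambda>t. (S (x + t *\<^sub>R z) - S x) /\<^sub>R t) \<longlongrightarrow> blinfun_apply G z) (at_right 0))"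

definition gateaux_points :: "('x::real_normed_vector \<Rightarrow> 'y::real_normed_vector) \<Rightarrow> 'x set" where
  "gateaux_points S = {x. \<exists>G. gateaux_deriv S x G}"

definition gateaux :: "('x::real_normed_vector \<Rightarrow> 'y::real_normed_vector) \<Rightarrow> 'x \<Rightarrow> ('x \<Rightarrow>\<^sub>L 'y)" where
  "gateaux S x = (THE G. gateaux_deriv S x G)"

definition bouligand_sw :: "('x::real_normed_vector \<Rightarrow> 'y::real_normed_vector) \<Rightarrow> 'x \<Rightarrow> ('x \<Rightarrow>\<^sub>L 'y) set" where
  "bouligand_sw S x = {G. \<exists>xs. (\<forall>n. xs n \<in> gateaux_points S) \<and> xs \<longlonglongrightarrow> x \<and>
       (\<forall>z. weakly_tendsto (\<lambda>n. blinfun_apply (gateaux S (xs n)) z) (blinfun_apply G z))}"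

end

theory Submission
  imports Defs
begin

lemma Lp_le_fin:
  assumes "p \<noteq> \<infinity>" "0 \<le> c" "0 < enn2real p"
  shows "Lpnorm M p f \<le> ennreal c \<longleftrightarrow>
    (\<integral>\<^sup>+\<omega>. ennreal (\<bar>f \<omega>\<bar> powr enn2real p) \<partial>M) \<le> ennreal (c powr enn2real p)"
proof -
  define I where "I = (\<integral>\<^sup>+\<omega>. ennreal (\<bar>f \<omega>\<bar> powr enn2real p) \<partial>M)"
  define P where "P = enn2real p"
  have P: "0 < P" using assms P_def by simp
  show ?thesis
  proof (cases "I = \<infinity>")
    case True
    then have "(\<integral>\<^sup>+\<omega>. ennreal (\<bar>f \<omega>\<bar> powr enn2real p) \<partial>M) = \<infinity>" using I_def by simp
    then show ?thesis using assms by (simp add: Lpnorm_def Let_def top_unique)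
  next
    case False
    then obtain i where i: "I = ennreal i" "0 \<le> i" by (cases I rule: ennreal_cases) auto
    have ii: "(\<integral>\<^sup>+\<omega>. ennreal (\<bar>f \<omega>\<bar> powr enn2real p) \<partial>M) = ennreal i" using i I_def by simp
    have L: "Lpnorm M p f = ennreal (i powr (1/P))"
      using assms i unfolding Lpnorm_def Let_def ii P_def by simp
    have "i powr (1/P) \<le> c \<longleftrightarrow> i \<le> c powr P"
    proof
      assume "i powr (1/P) \<le> c"
      then have "(i powr (1/P)) powr P \<le> c powr P" using P by (intro powr_mono2) auto
      then show "i \<le> c powr P" using P i by (simp add: powr_powr powr_one)
    next
      assume "i \<le> c powr P"
      then have "i powr (1/P) \<le> (c powr P) powr (1/P)" using P i by (intro powr_mono2) auto
      then show "i powr (1/P) \<le> c" using P assms by (simp add: powr_powr powr_one)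
    qed
    then show ?thesis using L i assms ii unfolding P_def by simp
  qed
qed

lemma Lp_le_inf:
  assumes "f \<in> borel_measurable M" "0 \<le> c"
  shows "Lpnorm M \<infinity> f \<le> ennreal c \<longleftrightarrow> (AE \<omega> in M. \<bar>f \<omega>\<bar> \<le> c)"
proof
  assume a: "Lpnorm M \<infinity> f \<le> ennreal c"
  have "AE \<omega> in M. ennreal \<bar>f \<omega>\<bar> \<le> esssup M (\<lambda>\<omega>. ennreal \<bar>f \<omega>\<bar>)" by (rule esssup_AE)
  then show "AE \<omega> in M. \<bar>f \<omega>\<bar> \<le> c"
    using a assms unfolding Lpnorm_def by (auto elim!: eventually_mono) (metis ennreal_le_iff order_trans)
next
  assume "AE \<omega> in M. \<bar>f \<omega>\<bar> \<le> c"
  then show "Lpnorm M \<infinity> f \<le> ennreal c" unfolding Lpnorm_def using assms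
    by (auto intro!: esssup_I elim!: eventually_mono)
qed

lemma enn2real_ge1: "1 \<le> p \<Longrightarrow> p \<noteq> \<infinity> \<Longrightarrow> 1 \<le> enn2real p"
  using enn2real_mono[of 1 p] by (simp add: less_top)

lemma Lp_mono:
  assumes "1 \<le> p" "f \<in> borel_measurable M" "g \<in> borel_measurable M"
    "AE \<omega> in M. \<bar>g \<omega>\<bar> \<le> \<bar>f \<omega>\<bar>" "Lpnorm M p f \<le> ennreal c" "0 \<le> c"
  shows "Lpnorm M p g \<le> ennreal c"
proof (cases "p = \<infinity>")
  case True
  have "AE \<omega> in M. \<bar>f \<omega>\<bar> \<le> c" by (rule Lp_le_inf[THEN iffD1]) (use assms True in auto)
  then have "AE \<omega> in M. \<bar>g \<omega>\<bar> \<le> c" using assms(4) by eventually_elim auto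
  then show ?thesis using assms unfolding True by (intro Lp_le_inf[THEN iffD2]) auto
next
  case False
  note P = enn2real_ge1[OF assms(1) False]
  have "(\<integral>\<^sup>+\<omega>. ennreal (\<bar>g \<omega>\<bar> powr enn2real p) \<partial>M) \<le> (\<integral>\<^sup>+\<omega>. ennreal (\<bar>f \<omega>\<bar> powr enn2real p) \<partial>M)"
    using assms(4) P by (intro nn_integral_mono_AE) (auto elim!: eventually_mono intro: powr_mono2)
  then show ?thesis using assms False P by (auto simp: Lp_le_fin)
qed


lemma Lp_add:
  assumes "1 \<le> p" "f \<in> borel_measurable M" "g \<in> borel_measurable M"
    "Lpnorm M p f \<le> ennreal a" "Lpnorm M p g \<le> ennreal b" "0 \<le> a" "0 \<le> b"
  shows "Lpnorm M p (\<lambda>\<omega>. f \<omega> + g \<omega>) \<le> ennreal (4 * (a + b))"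
proof (cases "p = \<infinity>")
  case True
  have "AE \<omega> in M. \<bar>f \<omega>\<bar> \<le> a" "AE \<omega> in M. \<bar>g \<omega>\<bar> \<le> b"
    by (rule Lp_le_inf[THEN iffD1]; use assms True in auto)+
  then have "AE \<omega> in M. \<bar>f \<omega> + g \<omega>\<bar> \<le> 4 * (a + b)" by eventually_elim (use assms in auto)
  then show ?thesis using assms unfolding True by (intro Lp_le_inf[THEN iffD2]) auto
next
  case False
  define P where "P = enn2real p"
  have P: "1 \<le> P" using enn2real_ge1[OF assms(1) False] P_def by simp
  have fI: "(\<integral>\<^sup>+\<omega>. ennreal (\<bar>f \<omega>\<bar> powr P) \<partial>M) \<le> ennreal (a powr P)"
    using assms False P unfolding P_def by (auto simp: Lp_le_fin)
  have gI: "(\<integral>\<^sup>+\<omega>. ennreal (\<bar>g \<omega>\<bar> powr P) \<partial>M) \<le> ennreal (b powr P)"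
    using assms False P unfolding P_def by (auto simp: Lp_le_fin)
  have pw: "\<bar>f \<omega> + g \<omega>\<bar> powr P \<le> 2 powr P * (\<bar>f \<omega>\<bar> powr P) + 2 powr P * (\<bar>g \<omega>\<bar> powr P)" for \<omega>
  proof -
    have "\<bar>f \<omega> + g \<omega>\<bar> \<le> 2 * max \<bar>f \<omega>\<bar> \<bar>g \<omega>\<bar>" by auto
    then have "\<bar>f \<omega> + g \<omega>\<bar> powr P \<le> (2 * max \<bar>f \<omega>\<bar> \<bar>g \<omega>\<bar>) powr P"
      using P by (intro powr_mono2) auto
    also have "\<dots> = 2 powr P * max \<bar>f \<omega>\<bar> \<bar>g \<omega>\<bar> powr P" by (simp add: powr_mult)
    also have "max \<bar>f \<omega>\<bar> \<bar>g \<omega>\<bar> powr P \<le> \<bar>f \<omega>\<bar> powr P + \<bar>g \<omega>\<bar> powr P"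
      by (cases "\<bar>f \<omega>\<bar> \<le> \<bar>g \<omega>\<bar>") (auto simp: max_def)
    finally show ?thesis by (simp add: algebra_simps)
  qed
  have "(\<integral>\<^sup>+\<omega>. ennreal (\<bar>f \<omega> + g \<omega>\<bar> powr P) \<partial>M)
      \<le> (\<integral>\<^sup>+\<omega>. ennreal (2 powr P) * ennreal (\<bar>f \<omega>\<bar> powr P) + ennreal (2 powr P) * ennreal (\<bar>g \<omega>\<bar> powr P) \<partial>M)"
    using pw by (intro nn_integral_mono) (simp add: ennreal_mult[symmetric] ennreal_plus[symmetric] del: ennreal_plus)
  also have "\<dots> = ennreal (2 powr P) * (\<integral>\<^sup>+\<omega>. ennreal (\<bar>f \<omega>\<bar> powr P) \<partial>M) + ennreal (2 powr P) * (\<integral>\<^sup>+\<omega>. ennreal (\<bar>g \<omega>\<bar> powr P) \<partial>M)"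
    using assms by (simp add: nn_integral_add nn_integral_cmult)
  also have "\<dots> \<le> ennreal (2 powr P) * ennreal (a powr P) + ennreal (2 powr P) * ennreal (b powr P)"
    using fI gI by (intro add_mono mult_left_mono) auto
  also have "\<dots> = ennreal (2 powr P * a powr P + 2 powr P * b powr P)"
    by (simp add: ennreal_mult[symmetric] ennreal_plus[symmetric] del: ennreal_plus)
  also have "\<dots> \<le> ennreal ((4 * (a + b)) powr P)"
  proof -
    have "a powr P \<le> (a+b) powr P" "b powr P \<le> (a+b) powr P" using assms P by (auto intro: powr_mono2)
    then have "2 powr P * a powr P + 2 powr P * b powr P \<le> 2 * 2 powr P * (a+b) powr P"
    proof -
      have "2 powr P * a powr P \<le> 2 powr P * (a+b) powr P" "2 powr P * b powr P \<le> 2 powr P * (a+b) powr P"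
        using \<open>a powr P \<le> (a+b) powr P\<close> \<open>b powr P \<le> (a+b) powr P\<close> by (auto intro: mult_left_mono)
      then show ?thesis by linarith
    qed
    also have "\<dots> \<le> 2 powr P * 2 powr P * (a+b) powr P"
    proof -
      have "(2::real) powr 1 \<le> 2 powr P" using P by (subst powr_le_cancel_iff) auto
      then have "2 \<le> (2::real) powr P" by simp
      then show ?thesis by (intro mult_right_mono) auto
    qed
    also have "\<dots> = (4 * (a + b)) powr P" by (simp add: powr_mult[symmetric])
    finally show ?thesis by (rule ennreal_leI)
  qed
  finally show ?thesis using assms False P unfolding P_def by (subst Lp_le_fin) auto
qed

lemma Lp_scale:
  assumes "1 \<le> p" "f \<in> borel_measurable M" "Lpnorm M p f \<le> ennreal a" "0 \<le> a"
  shows "Lpnorm M p (\<lambda>\<omega>. c * f \<omega>) \<le> ennreal (\<bar>c\<bar> * a)"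
proof (cases "p = \<infinity>")
  case True
  have "AE \<omega> in M. \<bar>f \<omega>\<bar> \<le> a" by (rule Lp_le_inf[THEN iffD1]) (use assms True in auto)
  then have "AE \<omega> in M. \<bar>c * f \<omega>\<bar> \<le> \<bar>c\<bar> * a" by eventually_elim (auto simp: abs_mult intro: mult_left_mono)
  then show ?thesis using assms unfolding True by (intro Lp_le_inf[THEN iffD2]) auto
next
  case False
  define P where "P = enn2real p"
  have P: "1 \<le> P" using enn2real_ge1[OF assms(1) False] P_def by simp
  have fI: "(\<integral>\<^sup>+\<omega>. ennreal (\<bar>f \<omega>\<bar> powr P) \<partial>M) \<le> ennreal (a powr P)"
    using assms False P unfolding P_def by (auto simp: Lp_le_fin)
  have "(\<integral>\<^sup>+\<omega>. ennreal (\<bar>c * f \<omega>\<bar> powr P) \<partial>M) = (\<integral>\<^sup>+\<omega>. ennreal (\<bar>c\<bar> powr P) * ennreal (\<bar>f \<omega>\<bar> powr P) \<partial>M)"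
    by (simp add: abs_mult powr_mult ennreal_mult)
  also have "\<dots> = ennreal (\<bar>c\<bar> powr P) * (\<integral>\<^sup>+\<omega>. ennreal (\<bar>f \<omega>\<bar> powr P) \<partial>M)"
    using assms by (simp add: nn_integral_cmult)
  also have "\<dots> \<le> ennreal (\<bar>c\<bar> powr P) * ennreal (a powr P)" using fI by (intro mult_left_mono) auto
  also have "\<dots> = ennreal ((\<bar>c\<bar> * a) powr P)" by (simp add: powr_mult ennreal_mult)
  finally show ?thesis using assms False P unfolding P_def by (subst Lp_le_fin) auto
qed

lemma Lp_zero:
  assumes "1 \<le> p" "f \<in> borel_measurable M" "\<And>e. 0 < e \<Longrightarrow> Lpnorm M p f \<le> ennreal e"
  shows "AE \<omega> in M. f \<omega> = 0"
proof -
  have "Lpnorm M p f \<le> 0 + ennreal 0"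
    by (rule ennreal_le_epsilon) (use assms in auto)
  then have L: "Lpnorm M p f \<le> ennreal 0" by simp
  show ?thesis
  proof (cases "p = \<infinity>")
    case True
    have "AE \<omega> in M. \<bar>f \<omega>\<bar> \<le> 0" by (rule Lp_le_inf[THEN iffD1]) (use assms True L in auto)
    then show ?thesis by (auto elim!: eventually_mono)
  next
    case False
    define P where "P = enn2real p"
    have P: "1 \<le> P" using enn2real_ge1[OF assms(1) False] P_def by simp
    have "(\<integral>\<^sup>+\<omega>. ennreal (\<bar>f \<omega>\<bar> powr P) \<partial>M) \<le> ennreal (0 powr P)"
      using L assms False P unfolding P_def by (subst (asm) Lp_le_fin) auto
    then have "(\<integral>\<^sup>+\<omega>. ennreal (\<bar>f \<omega>\<bar> powr P) \<partial>M) = 0" by simp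
    then have "AE \<omega> in M. ennreal (\<bar>f \<omega>\<bar> powr P) = 0" using assms by (subst (asm) nn_integral_0_iff_AE) auto
    then show ?thesis by (auto elim!: eventually_mono)
  qed
qed




lemma pw_interp_ord:
  fixes x lam a b P :: real
  assumes "0 < lam" "a < P" "P < b" "0 \<le> x"
  shows "x powr P \<le> lam powr (P - a) * x powr a + lam powr (P - b) * x powr b"
proof (cases "x \<le> lam")
  case True
  have "x powr P = x powr a * x powr (P - a)" by (simp add: powr_add[symmetric])
  also have "\<dots> \<le> x powr a * lam powr (P - a)"
    using True assms by (intro mult_left_mono powr_mono2) auto
  finally show ?thesis by (simp add: mult.commute add_increasing2)
next
  case False
  have "x powr P = x powr b * x powr (P - b)" by (simp add: powr_add[symmetric])
  also have "\<dots> \<le> x powr b * lam powr (P - b)"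
    using False assms by (intro mult_left_mono powr_mono2') auto
  finally show ?thesis by (simp add: mult.commute add_increasing)
qed

lemma pw_interp:
  fixes x lam a b P :: real
  assumes "0 < lam" "min a b < P" "P < max a b" "0 \<le> x"
  shows "x powr P \<le> lam powr (P - a) * x powr a + lam powr (P - b) * x powr b"
proof (cases "a \<le> b")
  case True
  then show ?thesis using assms pw_interp_ord[of lam a P b x] by auto
next
  case False
  then show ?thesis using assms pw_interp_ord[of lam b P a x] by auto
qed

lemma frac_le1: "0 \<le> (x::real) \<Longrightarrow> x / (x + 1) \<le> 1"
  by (simp add: divide_le_eq_1)

lemma powr_inv_cancel: "0 < c \<Longrightarrow> a \<noteq> 0 \<Longrightarrow> (c powr (1/a)) powr a = (c::real)"
  by (simp add: powr_powr)

lemma Lp_interp: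
  assumes q: "1 \<le> q" and r: "1 \<le> r" and p: "min q r < p" "p < max q r"
    and K: "0 \<le> K" and e: "0 < e"
  shows "\<exists>\<delta>>0. \<forall>f. f \<in> borel_measurable M \<longrightarrow> Lpnorm M r f \<le> ennreal K \<longrightarrow>
            Lpnorm M q f \<le> ennreal \<delta> \<longrightarrow> Lpnorm M p f \<le> ennreal e"
proof -
  have pfin: "p \<noteq> \<infinity>" using p by (auto simp: max_def split: if_splits)
  have p1: "1 \<le> p" using p q r by (auto simp: min_def split: if_splits)
  define P where "P = enn2real p"
  have P1: "1 \<le> P" using enn2real_ge1[OF p1 pfin] P_def by simp
  have pP: "p = ennreal P" using pfin P_def by (simp add: less_top)
  define c where "c = e powr P / 2"
  have c: "0 < c" using e by (simp add: c_def)
  show ?thesis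
  proof (cases "q = \<infinity>")
    case qinf: True
    then have rfin: "r \<noteq> \<infinity>" and rp: "r < p" using p by (auto simp: min_def max_def split: if_splits)
    define R where "R = enn2real r"
    have R1: "1 \<le> R" using enn2real_ge1[OF r rfin] R_def by simp
    have rR: "r = ennreal R" using rfin R_def by (simp add: less_top)
    have RP: "R < P" using rp pP rR R1 by (simp add: ennreal_less_iff)
    define \<delta> where "\<delta> = (e powr P / (K powr R + 1)) powr (1 / (P - R))"
    have d0: "0 < \<delta>" using e by (simp add: \<delta>_def) (smt (verit) powr_ge_zero)
    have dPR: "\<delta> powr (P - R) = e powr P / (K powr R + 1)"
      unfolding \<delta>_def using RP e using powr_ge_zero[of K R] powr_ge_zero[of K "P - Q"] by (intro powr_inv_cancel) (auto intro!: divide_pos_pos simp del: powr_ge_zero)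
    show ?thesis
    proof (intro exI[of _ \<delta>] conjI allI impI d0)
      fix f :: "'a \<Rightarrow> real"
      assume fm: "f \<in> borel_measurable M" and fr: "Lpnorm M r f \<le> ennreal K" and fq: "Lpnorm M q f \<le> ennreal \<delta>"
      have Ib: "AE \<omega> in M. \<bar>f \<omega>\<bar> \<le> \<delta>" by (rule Lp_le_inf[THEN iffD1]) (use fq qinf fm d0 in auto)
      have IR: "(\<integral>\<^sup>+\<omega>. ennreal (\<bar>f \<omega>\<bar> powr R) \<partial>M) \<le> ennreal (K powr R)"
        using fr rfin R1 K unfolding R_def by (subst (asm) Lp_le_fin) auto
      have "(\<integral>\<^sup>+\<omega>. ennreal (\<bar>f \<omega>\<bar> powr P) \<partial>M) \<le> (\<integral>\<^sup>+\<omega>. ennreal (\<delta> powr (P - R)) * ennreal (\<bar>f \<omega>\<bar> powr R) \<partial>M)"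
      proof (rule nn_integral_mono_AE)
        show "AE \<omega> in M. ennreal (\<bar>f \<omega>\<bar> powr P) \<le> ennreal (\<delta> powr (P - R)) * ennreal (\<bar>f \<omega>\<bar> powr R)"
          using Ib
        proof eventually_elim
          case (elim \<omega>)
          have "\<bar>f \<omega>\<bar> powr P = \<bar>f \<omega>\<bar> powr R * \<bar>f \<omega>\<bar> powr (P - R)" by (simp add: powr_add[symmetric])
          also have "\<dots> \<le> \<bar>f \<omega>\<bar> powr R * \<delta> powr (P - R)"
            using elim RP by (intro mult_left_mono powr_mono2) auto
          finally show ?case by (simp add: ennreal_mult[symmetric] mult.commute)
        qed
      qed
      also have "\<dots> = ennreal (\<delta> powr (P - R)) * (\<integral>\<^sup>+\<omega>. ennreal (\<bar>f \<omega>\<bar> powr R) \<partial>M)"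
        using fm by (simp add: nn_integral_cmult)
      also have "\<dots> \<le> ennreal (\<delta> powr (P - R)) * ennreal (K powr R)" using IR by (intro mult_left_mono) auto
      also have "\<dots> = ennreal (\<delta> powr (P - R) * K powr R)" by (simp add: ennreal_mult)
      also have "\<dots> \<le> ennreal (e powr P)"
      proof (rule ennreal_leI)
        have "\<delta> powr (P - R) * K powr R = e powr P * (K powr R / (K powr R + 1))" using dPR by simp
        also have "\<dots> \<le> e powr P * 1" by (intro mult_left_mono frac_le1) auto
        finally show "\<delta> powr (P - R) * K powr R \<le> e powr P" by simp
      qed
      finally show "Lpnorm M p f \<le> ennreal e" using pfin p1 e P1 unfolding P_def by (subst Lp_le_fin) auto
    qed
  next
    case qfin: False
    define Q where "Q = enn2real q"
    have Q1: "1 \<le> Q" using enn2real_ge1[OF q qfin] Q_def by simp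
    have qQ: "q = ennreal Q" using qfin Q_def by (simp add: less_top)
    show ?thesis
    proof (cases "r = \<infinity>")
      case rinf: True
      then have qp: "q < p" using p qfin by (auto simp: min_def max_def split: if_splits)
      have QP: "Q < P" using qp pP qQ Q1 by (simp add: ennreal_less_iff)
      define \<delta> where "\<delta> = (e powr P / (K powr (P - Q) + 1)) powr (1 / Q)"
      have d0: "0 < \<delta>" using e by (simp add: \<delta>_def) (smt (verit) powr_ge_zero)
      have dQ: "\<delta> powr Q = e powr P / (K powr (P - Q) + 1)"
        unfolding \<delta>_def using Q1 e using powr_ge_zero[of K R] powr_ge_zero[of K "P - Q"] by (intro powr_inv_cancel) (auto intro!: divide_pos_pos simp del: powr_ge_zero)
      show ?thesis
      proof (intro exI[of _ \<delta>] conjI allI impI d0)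
        fix f :: "'a \<Rightarrow> real"
        assume fm: "f \<in> borel_measurable M" and fr: "Lpnorm M r f \<le> ennreal K" and fq: "Lpnorm M q f \<le> ennreal \<delta>"
        have Ib: "AE \<omega> in M. \<bar>f \<omega>\<bar> \<le> K" by (rule Lp_le_inf[THEN iffD1]) (use fr rinf fm K in auto)
        have IQ: "(\<integral>\<^sup>+\<omega>. ennreal (\<bar>f \<omega>\<bar> powr Q) \<partial>M) \<le> ennreal (\<delta> powr Q)"
          using fq qfin Q1 d0 unfolding Q_def by (subst (asm) Lp_le_fin) auto
        have "(\<integral>\<^sup>+\<omega>. ennreal (\<bar>f \<omega>\<bar> powr P) \<partial>M) \<le> (\<integral>\<^sup>+\<omega>. ennreal (K powr (P - Q)) * ennreal (\<bar>f \<omega>\<bar> powr Q) \<partial>M)"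
        proof (rule nn_integral_mono_AE)
          show "AE \<omega> in M. ennreal (\<bar>f \<omega>\<bar> powr P) \<le> ennreal (K powr (P - Q)) * ennreal (\<bar>f \<omega>\<bar> powr Q)"
            using Ib
          proof eventually_elim
            case (elim \<omega>)
            have "\<bar>f \<omega>\<bar> powr P = \<bar>f \<omega>\<bar> powr Q * \<bar>f \<omega>\<bar> powr (P - Q)" by (simp add: powr_add[symmetric])
            also have "\<dots> \<le> \<bar>f \<omega>\<bar> powr Q * K powr (P - Q)"
              using elim QP by (intro mult_left_mono powr_mono2) auto
            finally show ?case by (simp add: ennreal_mult[symmetric] mult.commute)
          qed
        qed
        also have "\<dots> = ennreal (K powr (P - Q)) * (\<integral>\<^sup>+\<omega>. ennreal (\<bar>f \<omega>\<bar> powr Q) \<partial>M)"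
          using fm by (simp add: nn_integral_cmult)
        also have "\<dots> \<le> ennreal (K powr (P - Q)) * ennreal (\<delta> powr Q)" using IQ by (intro mult_left_mono) auto
        also have "\<dots> = ennreal (K powr (P - Q) * \<delta> powr Q)" by (simp add: ennreal_mult)
        also have "\<dots> \<le> ennreal (e powr P)"
        proof (rule ennreal_leI)
          have "K powr (P - Q) * \<delta> powr Q = e powr P * (K powr (P - Q) / (K powr (P - Q) + 1))" using dQ by simp
          also have "\<dots> \<le> e powr P * 1" by (intro mult_left_mono frac_le1) auto
          finally show "K powr (P - Q) * \<delta> powr Q \<le> e powr P" by simp
        qed
        finally show "Lpnorm M p f \<le> ennreal e" using pfin p1 e P1 unfolding P_def by (subst Lp_le_fin) auto
      qed
    next
      case rfin: False
      define R where "R = enn2real r"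
      have R1: "1 \<le> R" using enn2real_ge1[OF r rfin] R_def by simp
      have rR: "r = ennreal R" using rfin R_def by (simp add: less_top)
      have mm: "min Q R < P" "P < max Q R"
        using p pP qQ rR Q1 R1 by (auto simp: ennreal_less_iff min_def max_def split: if_splits)
      then have PR: "P \<noteq> R" by auto
      define lam where "lam = (c / (K powr R + 1)) powr (1 / (P - R))"
      have l0: "0 < lam" using c by (simp add: lam_def) (smt (verit) powr_ge_zero)
      have lR: "lam powr (P - R) = c / (K powr R + 1)"
        unfolding lam_def using PR c using powr_ge_zero[of K R] powr_ge_zero[of K "P - Q"] by (intro powr_inv_cancel) (auto intro!: divide_pos_pos simp del: powr_ge_zero)
      define \<delta> where "\<delta> = (c / lam powr (P - Q)) powr (1 / Q)"
      have d0: "0 < \<delta>" using c l0 by (simp add: \<delta>_def)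
      have dQ: "\<delta> powr Q = c / lam powr (P - Q)"
        unfolding \<delta>_def using Q1 c l0 by (intro powr_inv_cancel) auto
      show ?thesis
      proof (intro exI[of _ \<delta>] conjI allI impI d0)
        fix f :: "'a \<Rightarrow> real"
        assume fm: "f \<in> borel_measurable M" and fr: "Lpnorm M r f \<le> ennreal K" and fq: "Lpnorm M q f \<le> ennreal \<delta>"
        have IQ: "(\<integral>\<^sup>+\<omega>. ennreal (\<bar>f \<omega>\<bar> powr Q) \<partial>M) \<le> ennreal (\<delta> powr Q)"
          using fq qfin Q1 d0 unfolding Q_def by (subst (asm) Lp_le_fin) auto
        have IR: "(\<integral>\<^sup>+\<omega>. ennreal (\<bar>f \<omega>\<bar> powr R) \<partial>M) \<le> ennreal (K powr R)"
          using fr rfin R1 K unfolding R_def by (subst (asm) Lp_le_fin) auto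
        have "(\<integral>\<^sup>+\<omega>. ennreal (\<bar>f \<omega>\<bar> powr P) \<partial>M) \<le> (\<integral>\<^sup>+\<omega>. ennreal (lam powr (P - Q)) * ennreal (\<bar>f \<omega>\<bar> powr Q) + ennreal (lam powr (P - R)) * ennreal (\<bar>f \<omega>\<bar> powr R) \<partial>M)"
          using pw_interp[OF l0 mm] by (intro nn_integral_mono) (simp add: ennreal_mult[symmetric] ennreal_plus[symmetric] del: ennreal_plus)
        also have "\<dots> = ennreal (lam powr (P - Q)) * (\<integral>\<^sup>+\<omega>. ennreal (\<bar>f \<omega>\<bar> powr Q) \<partial>M) + ennreal (lam powr (P - R)) * (\<integral>\<^sup>+\<omega>. ennreal (\<bar>f \<omega>\<bar> powr R) \<partial>M)"
          using fm by (simp add: nn_integral_add nn_integral_cmult)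
        also have "\<dots> \<le> ennreal (lam powr (P - Q)) * ennreal (\<delta> powr Q) + ennreal (lam powr (P - R)) * ennreal (K powr R)"
          using IQ IR by (intro add_mono mult_left_mono) auto
        also have "\<dots> = ennreal (lam powr (P - Q) * \<delta> powr Q + lam powr (P - R) * K powr R)"
          by (simp add: ennreal_mult[symmetric] ennreal_plus[symmetric] del: ennreal_plus)
        also have "\<dots> \<le> ennreal (e powr P)"
        proof (rule ennreal_leI)
          have a: "lam powr (P - Q) * \<delta> powr Q = c" using dQ l0 by simp
          have "lam powr (P - R) * K powr R = c * (K powr R / (K powr R + 1))" using lR by simp
          also have "\<dots> \<le> c * 1" using c by (intro mult_left_mono frac_le1) auto
          finally show "lam powr (P - Q) * \<delta> powr Q + lam powr (P - R) * K powr R \<le> e powr P"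
            using a c_def by simp
        qed
        finally show "Lpnorm M p f \<le> ennreal e" using pfin p1 e P1 unfolding P_def by (subst Lp_le_fin) auto
      qed
    qed
  qed
qed



definition okg :: "('y::real_normed_vector \<Rightarrow> real) \<Rightarrow> 'y \<Rightarrow> ('y \<times> real) set \<Rightarrow> bool" where
  "okg p u G \<longleftrightarrow> (0,0) \<in> G \<and> (\<forall>a b a' b'. (a,b) \<in> G \<longrightarrow> (a',b') \<in> G \<longrightarrow> (a+a', b+b') \<in> G) \<and>
     (\<forall>a b t. (a,b) \<in> G \<longrightarrow> (t *\<^sub>R a, t*b) \<in> G) \<and> (\<forall>b. (0,b) \<in> G \<longrightarrow> b = 0) \<and>
     (\<forall>a b. (a,b) \<in> G \<longrightarrow> b \<le> p a) \<and> (u, p u) \<in> G"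

lemma sublinear_HB:
  fixes p :: "'y::real_normed_vector \<Rightarrow> real"
  assumes sub: "\<And>a b. p (a + b) \<le> p a + p b"
    and hom: "\<And>t a. 0 < t \<Longrightarrow> p (t *\<^sub>R a) = t * p a"
    and p0: "p 0 = 0"
    and u: "\<And>t. t * p u \<le> p (t *\<^sub>R u)" and u0: "u \<noteq> 0"
  shows "\<exists>f. (\<forall>a b. f (a + b) = f a + f b) \<and> (\<forall>t a. f (t *\<^sub>R a) = t * f a) \<and> (\<forall>a. f a \<le> p a) \<and> f u = p u"
proof -
  define A where "A = {G. okg p u G}"
  define G0 where "G0 = {(t *\<^sub>R u, t * p u) | t. True}"
  have G0: "G0 \<in> A"
  proof -
    have "(0, 0) \<in> G0" unfolding G0_def by (auto intro!: exI[of _ 0])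
    moreover have "(u, p u) \<in> G0" unfolding G0_def by (auto intro!: exI[of _ 1])
    moreover have "(a + a', b + b') \<in> G0" if "(a, b) \<in> G0" "(a', b') \<in> G0" for a b a' b'
      using that unfolding G0_def by clarsimp (metis scaleR_add_left distrib_right)
    moreover have "(t *\<^sub>R a, t * b) \<in> G0" if "(a, b) \<in> G0" for a b t
      using that unfolding G0_def by clarsimp (metis scaleR_scaleR mult.assoc)
    moreover have "b = 0" if "(0, b) \<in> G0" for b using that u0 unfolding G0_def by auto
    moreover have "b \<le> p a" if "(a, b) \<in> G0" for a b using that u unfolding G0_def by auto
    ultimately show ?thesis unfolding A_def okg_def by blast
  qed
  have "\<exists>M\<in>A. \<forall>X\<in>A. M \<subseteq> X \<longrightarrow> X = M"
  proof (rule Zorn_Lemma2, intro ballI)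
    fix Ch assume Ch: "Ch \<in> chains A"
    show "\<exists>U\<in>A. \<forall>X\<in>Ch. X \<subseteq> U"
    proof (cases "Ch = {}")
      case True
      then show ?thesis using G0 by auto
    next
      case False
      have sub: "Ch \<subseteq> A" and ch: "\<And>X Y. X \<in> Ch \<Longrightarrow> Y \<in> Ch \<Longrightarrow> X \<subseteq> Y \<or> Y \<subseteq> X"
        using Ch by (auto simp: chains_def chain_subset_def)
      have okX: "\<And>X. X \<in> Ch \<Longrightarrow> okg p u X" using sub A_def by auto
      have "okg p u (\<Union>Ch)"
        unfolding okg_def
      proof (intro conjI allI impI)
        obtain X where X: "X \<in> Ch" using False by auto
        show "(0,0) \<in> \<Union>Ch" using okX[OF X] X unfolding okg_def by auto
        show "(u, p u) \<in> \<Union>Ch" using okX[OF X] X unfolding okg_def by auto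
      next
        fix a b a' b'
        assume "(a, b) \<in> \<Union>Ch" "(a', b') \<in> \<Union>Ch"
        then obtain X Y where XY: "X \<in> Ch" "Y \<in> Ch" "(a,b) \<in> X" "(a',b') \<in> Y" by auto
        show "(a + a', b + b') \<in> \<Union>Ch"
        proof (cases "X \<subseteq> Y")
          case True
          then show ?thesis using XY okX[of Y] unfolding okg_def by blast
        next
          case False
          then have "Y \<subseteq> X" using ch XY by blast
          then show ?thesis using XY okX[of X] unfolding okg_def by blast
        qed
      next
        fix a b t assume "(a, b) \<in> \<Union>Ch"
        then show "(t *\<^sub>R a, t * b) \<in> \<Union>Ch" using okX unfolding okg_def by blast
      next
        fix b assume "(0, b) \<in> \<Union>Ch"
        then show "b = 0" using okX unfolding okg_def by blast
      next
        fix a b assume "(a, b) \<in> \<Union>Ch"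
        then show "b \<le> p a" using okX unfolding okg_def by blast
      qed
      then show ?thesis unfolding A_def by auto
    qed
  qed
  then obtain M where MA: "okg p u M" and Mmax: "\<And>X. okg p u X \<Longrightarrow> M \<subseteq> X \<Longrightarrow> X = M"
    unfolding A_def by auto
  note Mok = MA[unfolded okg_def]
  have M0: "(0,0) \<in> M" and Madd: "\<And>a b a' b'. (a,b) \<in> M \<Longrightarrow> (a',b') \<in> M \<Longrightarrow> (a+a', b+b') \<in> M"
    and Msc: "\<And>a b t. (a,b) \<in> M \<Longrightarrow> (t *\<^sub>R a, t*b) \<in> M" and Mfun: "\<And>b. (0,b) \<in> M \<Longrightarrow> b = 0"
    and Mdom: "\<And>a b. (a,b) \<in> M \<Longrightarrow> b \<le> p a" and Mu: "(u, p u) \<in> M"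
    using Mok by blast+
  have total: "\<exists>b. (y,b) \<in> M" for y
  proof (rule ccontr)
    assume nv: "\<not> (\<exists>b. (y, b) \<in> M)"
    define v where "v = y"
    define S where "S = {b - p (a - v) | a b. (a,b) \<in> M}"
    have Sne: "S \<noteq> {}" using M0 S_def by auto
    have bnd: "b - p (a - v) \<le> p (a' + v) - b'" if "(a,b) \<in> M" "(a',b') \<in> M" for a b a' b'
    proof -
      have "b + b' \<le> p (a + a')" using Mdom[OF Madd[OF that]] .
      also have "\<dots> \<le> p (a - v) + p (a' + v)" using sub[of "a - v" "a' + v"] by simp
      finally show ?thesis by simp
    qed
    have Sbdd: "bdd_above S" unfolding S_def bdd_above_def using bnd[OF _ M0] by auto
    define c where "c = Sup S"
    have c1: "b - p (a - v) \<le> c" if "(a,b) \<in> M" for a b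
      unfolding c_def by (rule cSup_upper) (use that Sbdd S_def in auto)
    have c2: "c \<le> p (a' + v) - b'" if "(a',b') \<in> M" for a' b'
      unfolding c_def by (rule cSup_least) (use Sne S_def bnd that in auto)
    define M' where "M' = {(a + t *\<^sub>R v, b + t * c) | a b t. (a,b) \<in> M}"
    have M'I: "(a1 + t *\<^sub>R v, b1 + t*c) \<in> M'" if "(a1,b1) \<in> M" for a1 b1 t
      unfolding M'_def using that by blast
    have M'ok: "okg p u M'"
      unfolding okg_def
    proof (intro conjI allI impI)
      show "(0,0) \<in> M'" unfolding M'_def using M0 by force
      show "(u, p u) \<in> M'" unfolding M'_def using Mu by force
    next
      fix a b a' b' assume "(a, b) \<in> M'" "(a', b') \<in> M'"
      then obtain a1 b1 t1 a2 b2 t2 where "(a1,b1) \<in> M" "(a2,b2) \<in> M" "a = a1 + t1 *\<^sub>R v" "b = b1 + t1 * c"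
        "a' = a2 + t2 *\<^sub>R v" "b' = b2 + t2 * c" unfolding M'_def by blast
      then show "(a + a', b + b') \<in> M'" using M'I[OF Madd, of a1 b1 a2 b2 "t1+t2"]
        by (simp add: algebra_simps)
    next
      fix a b t assume "(a, b) \<in> M'"
      then obtain a1 b1 t1 where "(a1,b1) \<in> M" "a = a1 + t1 *\<^sub>R v" "b = b1 + t1 * c" unfolding M'_def by blast
      then show "(t *\<^sub>R a, t * b) \<in> M'" using M'I[OF Msc, of a1 b1 t "t*t1"]
        by (simp add: algebra_simps)
    next
      fix b assume "(0, b) \<in> M'"
      then obtain a1 b1 t1 where h: "(a1,b1) \<in> M" "0 = a1 + t1 *\<^sub>R v" "b = b1 + t1 * c" unfolding M'_def by blast
      show "b = 0"
      proof (cases "t1 = 0")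
        case True
        then show ?thesis using h Mfun by auto
      next
        case False
        have "v = (- 1 / t1) *\<^sub>R a1" using h(2) False
        proof -
          have "t1 *\<^sub>R v = - a1" using h(2) by (simp add: eq_neg_iff_add_eq_0 add.commute)
          then have "inverse t1 *\<^sub>R (t1 *\<^sub>R v) = inverse t1 *\<^sub>R (- a1)" by simp
          then show ?thesis using False by (simp add: divide_inverse)
        qed
        then have "(v, (- 1 / t1) * b1) \<in> M" using Msc[OF h(1), of "- 1 / t1"] by metis
        then show ?thesis using nv v_def by auto
      qed
    next
      fix a b assume "(a, b) \<in> M'"
      then obtain a1 b1 t where h: "(a1,b1) \<in> M" "a = a1 + t *\<^sub>R v" "b = b1 + t * c" unfolding M'_def by blast
      show "b \<le> p a"
      proof (cases t "0::real" rule: linorder_cases)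
        case equal
        then show ?thesis using h Mdom by auto
      next
        case greater
        have "(inverse t *\<^sub>R a1, inverse t * b1) \<in> M" using Msc[OF h(1)] .
        from c2[OF this] have "t * c \<le> t * (p (inverse t *\<^sub>R a1 + v) - inverse t * b1)"
          using greater by (intro mult_left_mono) auto
        also have "\<dots> = p (t *\<^sub>R (inverse t *\<^sub>R a1 + v)) - b1"
          using greater hom[OF greater, of "inverse t *\<^sub>R a1 + v"] by (simp add: right_diff_distrib)
        also have "t *\<^sub>R (inverse t *\<^sub>R a1 + v) = a" using greater h by (simp add: algebra_simps)
        finally show ?thesis using h by simp
      next
        case less
        define s where "s = - t"
        have s: "0 < s" using less s_def by simp
        have "(inverse s *\<^sub>R a1, inverse s * b1) \<in> M" using Msc[OF h(1)] .
        from c1[OF this] have "s * (inverse s * b1 - p (inverse s *\<^sub>R a1 - v)) \<le> s * c"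
          using s by (intro mult_left_mono) auto
        then have "b1 - s * c \<le> s * p (inverse s *\<^sub>R a1 - v)" using s by (simp add: algebra_simps)
        also have "\<dots> = p (s *\<^sub>R (inverse s *\<^sub>R a1 - v))" using hom[OF s, of "inverse s *\<^sub>R a1 - v"] by simp
        also have "s *\<^sub>R (inverse s *\<^sub>R a1 - v) = a" using s h s_def by (simp add: algebra_simps)
        finally show ?thesis using h s_def by simp
      qed
    qed
    have "M \<subseteq> M'" unfolding M'_def by force
    from Mmax[OF M'ok this] have "M' = M" .
    moreover have "(v, c) \<in> M'" using M'I[OF M0, of 1] by simp
    ultimately show False using nv v_def by auto
  qed
  define f where "f y = (SOME b. (y,b) \<in> M)" for y
  have fM: "(y, f y) \<in> M" for y unfolding f_def using total[of y] by (rule someI_ex)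
  have uniq: "b1 = b2" if "(y,b1) \<in> M" "(y,b2) \<in> M" for y b1 b2
  proof -
    have "(y + (-1) *\<^sub>R y, b1 + (-1) * b2) \<in> M" using Madd[OF that(1) Msc[OF that(2)]] .
    then show ?thesis using Mfun by force
  qed
  show ?thesis
  proof (intro exI[of _ f] conjI allI)
    fix a b show "f (a + b) = f a + f b" using uniq[OF fM Madd[OF fM fM]] .
  next
    fix t a show "f (t *\<^sub>R a) = t * f a" using uniq[OF fM Msc[OF fM]] .
  next
    fix a show "f a \<le> p a" using Mdom[OF fM] .
  next
    show "f u = p u" using uniq[OF fM Mu] .
  qed
qed



lemma cone_sep:
  fixes C :: "'y::real_normed_vector set"
  assumes cl: "closed C" and C0: "0 \<in> C" and Cadd: "\<And>a b. a \<in> C \<Longrightarrow> b \<in> C \<Longrightarrow> a + b \<in> C"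
    and Csc: "\<And>a t. a \<in> C \<Longrightarrow> 0 \<le> t \<Longrightarrow> t *\<^sub>R a \<in> C" and u: "u \<notin> C"
  shows "\<exists>f::'y \<Rightarrow>\<^sub>L real. 0 < blinfun_apply f u \<and> (\<forall>c\<in>C. blinfun_apply f c \<le> 0)"
proof -
  define p where "p y = infdist y C" for y
  have Cne: "C \<noteq> {}" using C0 by auto
  have sub: "p (a + b) \<le> p a + p b" for a b
  proof -
    have 1: "p (a + b) \<le> dist a c1 + dist b c2" if "c1 \<in> C" "c2 \<in> C" for c1 c2
    proof -
      have "p (a + b) \<le> dist (a + b) (c1 + c2)" unfolding p_def using Cadd[OF that] by (rule infdist_le)
      also have "\<dots> \<le> dist a c1 + dist b c2" unfolding dist_norm
        using norm_triangle_ineq[of "a - c1" "b - c2"] by (simp add: algebra_simps)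
      finally show ?thesis .
    qed
    have 2: "p (a + b) - p a \<le> dist b c2" if "c2 \<in> C" for c2
    proof -
      have "p (a + b) - dist b c2 \<le> p a" unfolding p_def infdist_notempty[OF Cne, of a]
        by (rule cINF_greatest[OF Cne]) (use 1 that p_def in force)
      then show ?thesis by simp
    qed
    have "p (a + b) - p a \<le> p b" unfolding p_def infdist_notempty[OF Cne, of b]
      by (rule cINF_greatest[OF Cne]) (use 2 p_def in force)
    then show ?thesis by simp
  qed
  have homle: "p (t *\<^sub>R a) \<le> t * p a" if t: "0 < t" for t a
  proof -
    have "p (t *\<^sub>R a) / t \<le> dist a c" if "c \<in> C" for c
    proof -
      have "p (t *\<^sub>R a) \<le> dist (t *\<^sub>R a) (t *\<^sub>R c)" unfolding p_def using Csc[OF that] t by (intro infdist_le) auto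
      also have "\<dots> = t * dist a c" using t by (simp add: dist_norm scaleR_diff_right[symmetric])
      finally show ?thesis using t by (simp add: divide_le_eq mult.commute)
    qed
    then have "p (t *\<^sub>R a) / t \<le> p a" unfolding p_def infdist_notempty[OF Cne, of a]
      by (intro cINF_greatest[OF Cne]) (simp add: p_def)
    then show ?thesis using t by (simp add: divide_le_eq mult.commute)
  qed
  have hom: "p (t *\<^sub>R a) = t * p a" if t: "0 < t" for t a
  proof -
    have "p a = p (inverse t *\<^sub>R (t *\<^sub>R a))" using t by simp
    also have "\<dots> \<le> inverse t * p (t *\<^sub>R a)" using t by (intro homle) auto
    finally have "t * p a \<le> p (t *\<^sub>R a)" using t by (simp add: field_simps)
    then show ?thesis using homle[OF t, of a] by simp
  qed
  have p0: "p 0 = 0" unfolding p_def using C0 by simp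
  have pnn: "0 \<le> p y" for y unfolding p_def by (rule infdist_nonneg)
  have pu: "t * p u \<le> p (t *\<^sub>R u)" for t
  proof (cases t "0::real" rule: linorder_cases)
    case less
    then have "t * p u \<le> 0" using pnn by (simp add: mult_nonpos_nonneg)
    then show ?thesis using pnn by (meson order_trans)
  qed (use hom p0 in auto)
  have u0: "u \<noteq> 0" using u C0 by auto
  obtain f where flin: "\<And>a b. f (a + b) = f a + f b" "\<And>t a. f (t *\<^sub>R a) = t * f a"
    and fp: "\<And>a. f a \<le> p a" and fu: "f u = p u"
    using sublinear_HB[of p u, OF sub hom p0 pu u0] by blast
  have pn: "p a \<le> norm a" for a unfolding p_def using infdist_le[OF C0, of a] by simp
  have fb: "norm (f a) \<le> norm a * 1" for a
  proof -
    have "f a \<le> norm a" using fp pn order_trans by blast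
    moreover have "- f a \<le> norm a" using fp[of "(-1) *\<^sub>R a"] pn[of "(-1) *\<^sub>R a"] flin(2)[of "-1" a] by simp
    ultimately show ?thesis by auto
  qed
  have bl: "bounded_linear f" by (rule bounded_linear_intro[OF flin(1) _ fb]) (simp add: flin(2))
  show ?thesis
  proof (intro exI[of _ "Blinfun f"] conjI ballI)
    show "0 < blinfun_apply (Blinfun f) u"
      using bounded_linear_Blinfun_apply[OF bl] fu infdist_pos_not_in_closed[OF cl Cne u] p_def by simp
  next
    fix c assume "c \<in> C"
    then show "blinfun_apply (Blinfun f) c \<le> 0"
      using bounded_linear_Blinfun_apply[OF bl] fp[of c] p_def by simp
  qed
qed



locale NS =
  fixes M :: "'w measure" and J :: "'y::banach \<Rightarrow> 'w \<Rightarrow> real" and E :: "'u::banach \<Rightarrow> 'x::banach"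
    and S :: "'x \<Rightarrow> 'y" and q r :: ennreal and CJ :: real
  assumes q: "1 \<le> q" and r: "1 \<le> r"
    and Jmeas: "\<And>y. J y \<in> borel_measurable M"
    and Jlin: "\<And>a y y'. AE \<omega> in M. J (a *\<^sub>R y + y') \<omega> = a * J y \<omega> + J y' \<omega>"
    and CJ: "0 < CJ"
    and Jbd: "\<And>y. Lpnorm M q (J y) \<le> ennreal (CJ * norm y)"
    and Jcomp: "\<And>ys::nat \<Rightarrow> 'y. bounded (range ys) \<Longrightarrow>
        (\<exists>(\<sigma>::nat \<Rightarrow> nat) (f::'w \<Rightarrow> real). strict_mono \<sigma> \<and> f \<in> borel_measurable M \<and> Lpnorm M q f < \<infinity> \<and>
               (\<lambda>n. Lpnorm M q (\<lambda>\<omega>. J (ys (\<sigma> n)) \<omega> - f \<omega>)) \<longlonglongrightarrow> 0)"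
    and Elin: "bounded_linear E"
    and Ecomp: "\<And>us::nat \<Rightarrow> 'u. bounded (range us) \<Longrightarrow> (\<exists>(\<sigma>::nat \<Rightarrow> nat) (l::'x). strict_mono \<sigma> \<and> (\<lambda>n. E (us (\<sigma> n))) \<longlonglongrightarrow> l)"
    and conv: "\<And>x1 x2 lam. 0 \<le> lam \<Longrightarrow> lam \<le> 1 \<Longrightarrow>
        AE \<omega> in M. J (S (lam *\<^sub>R x1 + (1 - lam) *\<^sub>R x2)) \<omega> \<le> lam * J (S x1) \<omega> + (1 - lam) * J (S x2) \<omega>"
    and lip: "\<And>x. \<exists>C>0. \<exists>\<epsilon>>0.
        (\<forall>x1 x2. norm (x1 - x) \<le> \<epsilon> \<longrightarrow> norm (x2 - x) \<le> \<epsilon> \<longrightarrow>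
            norm (S x1 - S x2) \<le> C * norm (x1 - x2)) \<and>
        (\<forall>x1 z. norm (x1 - x) \<le> \<epsilon> \<longrightarrow> norm z \<le> \<epsilon> \<longrightarrow>
            Lpnorm M r (J (S (x1 + E z) - S x1)) \<le> ennreal (C * norm z))"
begin

lemma J_add: "AE \<omega> in M. J (y + y') \<omega> = J y \<omega> + J y' \<omega>"
  using Jlin[of 1 y y'] by simp

lemma J_0: "AE \<omega> in M. J 0 \<omega> = 0"
  using Jlin[of 1 0 0] by simp

lemma J_sc: "AE \<omega> in M. J (a *\<^sub>R y) \<omega> = a * J y \<omega>"
  using Jlin[of a y 0] J_0 by eventually_elim simp

lemma J_diff: "AE \<omega> in M. J (y - y') \<omega> = J y \<omega> - J y' \<omega>"
  using Jlin[of "-1" y' y] by simp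

lemma J_neg: "AE \<omega> in M. J (- y) \<omega> = - J y \<omega>"
  using J_sc[of "-1" y] by simp

lemma Jdist: "Lpnorm M q (\<lambda>\<omega>. J y \<omega> - J y' \<omega>) \<le> ennreal (CJ * norm (y - y'))"
proof (rule Lp_mono[OF q Jmeas _ _ Jbd])
  show "(\<lambda>\<omega>. J y \<omega> - J y' \<omega>) \<in> borel_measurable M" using Jmeas by measurable
  show "AE \<omega> in M. \<bar>J y \<omega> - J y' \<omega>\<bar> \<le> \<bar>J (y - y') \<omega>\<bar>" using J_diff[of y y'] by eventually_elim simp
  show "0 \<le> CJ * norm (y - y')" using CJ by simp
qed

definition Cn :: "'y set" where "Cn = {u. AE \<omega> in M. J u \<omega> \<le> 0}"

lemma Cn0: "0 \<in> Cn" unfolding Cn_def mem_Collect_eq using J_0 by eventually_elim simp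

lemma Cnadd: assumes "a \<in> Cn" "b \<in> Cn" shows "a + b \<in> Cn"
  using assms J_add[of a b] unfolding Cn_def mem_Collect_eq by eventually_elim simp

lemma Cnsc: assumes "a \<in> Cn" "0 \<le> t" shows "t *\<^sub>R a \<in> Cn"
  using assms(1) J_sc[of t a] unfolding Cn_def mem_Collect_eq by eventually_elim (use assms(2) in \<open>simp add: mult_nonneg_nonpos\<close>)

lemma Cn_closed: "closed Cn"
  unfolding closed_sequential_limits
proof (intro allI impI, elim conjE)
  fix us u assume us: "\<forall>n. us n \<in> Cn" and lim: "us \<longlonglongrightarrow> u"
  define g where "g \<omega> = max (J u \<omega>) 0" for \<omega>
  have gm: "g \<in> borel_measurable M" unfolding g_def using Jmeas by measurable
  have "AE \<omega> in M. g \<omega> = 0"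
  proof (rule Lp_zero[OF q gm])
    fix e :: real assume e: "0 < e"
    have "(\<lambda>n. u - us n) \<longlonglongrightarrow> 0" using tendsto_diff[OF tendsto_const[of u] lim] by simp
    then have "(\<lambda>n. CJ * norm (u - us n)) \<longlonglongrightarrow> CJ * 0"
      by (intro tendsto_mult tendsto_const tendsto_norm_zero)
    then obtain n where n: "CJ * norm (u - us n) < e"
      using e by (metis (no_types, lifting) eventually_sequentially order_tendstoD(2) mult_zero_right order_refl)
    have "Lpnorm M q g \<le> ennreal (CJ * norm (u - us n))"
    proof (rule Lp_mono[OF q _ gm _ Jdist])
      show "(\<lambda>\<omega>. J u \<omega> - J (us n) \<omega>) \<in> borel_measurable M" using Jmeas by measurable
      show "AE \<omega> in M. \<bar>g \<omega>\<bar> \<le> \<bar>J u \<omega> - J (us n) \<omega>\<bar>"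
        using us[rule_format, of n] unfolding Cn_def g_def by (auto elim!: eventually_mono)
      show "0 \<le> CJ * norm (u - us n)" using CJ by simp
    qed
    also have "\<dots> \<le> ennreal e" using n by (intro ennreal_leI) simp
    finally show "Lpnorm M q g \<le> ennreal e" .
  qed
  then show "u \<in> Cn" unfolding Cn_def g_def by (auto elim!: eventually_mono)
qed

lemma Cn_weak:
  assumes "\<And>n. us n \<in> Cn" and "\<And>f::'y \<Rightarrow>\<^sub>L real. (\<lambda>n. blinfun_apply f (us n)) \<longlonglongrightarrow> blinfun_apply f u"
  shows "u \<in> Cn"
proof (rule ccontr)
  assume "u \<notin> Cn"
  then obtain f :: "'y \<Rightarrow>\<^sub>L real" where f: "0 < blinfun_apply f u" "\<forall>c\<in>Cn. blinfun_apply f c \<le> 0"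
    using cone_sep[OF Cn_closed Cn0 Cnadd Cnsc] by blast
  have "blinfun_apply f u \<le> 0"
    by (rule LIMSEQ_le_const2[OF assms(2)[of f]]) (use f assms(1) in auto)
  then show False using f by simp
qed

lemma S_cont: assumes "xs \<longlonglongrightarrow> a" shows "(\<lambda>n. S (xs n)) \<longlonglongrightarrow> S a"
proof -
  obtain C \<epsilon> where C: "C > 0" "\<epsilon> > 0" and L: "\<And>x1 x2. norm (x1 - a) \<le> \<epsilon> \<Longrightarrow> norm (x2 - a) \<le> \<epsilon> \<Longrightarrow>
            norm (S x1 - S x2) \<le> C * norm (x1 - x2)" using lip[of a] by blast
  have z: "(\<lambda>n. xs n - a) \<longlonglongrightarrow> 0" using assms by (simp add: LIM_zero_iff)
  then have nz: "(\<lambda>n. norm (xs n - a)) \<longlonglongrightarrow> 0" by (rule tendsto_norm_zero)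
  have ev: "eventually (\<lambda>n. norm (xs n - a) \<le> \<epsilon>) sequentially"
    using order_tendstoD(2)[OF nz C(2)] by eventually_elim simp
  have "(\<lambda>n. S (xs n) - S a) \<longlonglongrightarrow> 0"
  proof (rule Lim_null_comparison)
    show "eventually (\<lambda>n. norm (S (xs n) - S a) \<le> C * norm (xs n - a)) sequentially"
      using ev by eventually_elim (use L C in auto)
    show "(\<lambda>n. C * norm (xs n - a)) \<longlonglongrightarrow> 0"
      using tendsto_mult_right_zero[OF nz, of C] by simp
  qed
  then show ?thesis by (simp add: LIM_zero_iff)
qed

lemma gateaux_unique: assumes "gateaux_deriv S y G1" "gateaux_deriv S y G2" shows "G1 = G2"
proof (rule blinfun_eqI)
  fix z
  have nb: "at_right (0::real) \<noteq> bot" by simp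
  show "blinfun_apply G1 z = blinfun_apply G2 z"
    using assms unfolding gateaux_deriv_def by (metis tendsto_unique[OF nb])
qed

lemma gateaux_ok: assumes "y \<in> gateaux_points S" shows "gateaux_deriv S y (gateaux S y)"
proof -
  obtain G where G: "gateaux_deriv S y G" using assms unfolding gateaux_points_def by auto
  have "gateaux S y = G" unfolding gateaux_def using G gateaux_unique by blast
  then show ?thesis using G by simp
qed

lemma gat_C:
  assumes "y \<in> gateaux_points S"
  shows "blinfun_apply (gateaux S y) v - (S (y + v) - S y) \<in> Cn"
proof -
  define D where "D = S (y + v) - S y"
  have lim: "((\<lambda>t. (S (y + t *\<^sub>R v) - S y) /\<^sub>R t - D) \<longlongrightarrow> blinfun_apply (gateaux S y) v - D) (at_right 0)"
    using gateaux_ok[OF assms] unfolding gateaux_deriv_def by (intro tendsto_diff tendsto_const) auto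
  have ev: "eventually (\<lambda>t. (S (y + t *\<^sub>R v) - S y) /\<^sub>R t - D \<in> Cn) (at_right (0::real))"
    unfolding eventually_at_right_field
  proof (intro exI[of _ 1] conjI allI impI)
    show "(0::real) < 1" by simp
  next
    fix t :: real assume t: "0 < t" "t < 1"
    have cv: "AE \<omega> in M. J (S (y + t *\<^sub>R v)) \<omega> \<le> t * J (S (y + v)) \<omega> + (1 - t) * J (S y) \<omega>"
      using conv[of t "y + v" y] t by (simp add: algebra_simps)
    show "(S (y + t *\<^sub>R v) - S y) /\<^sub>R t - D \<in> Cn"
      unfolding Cn_def D_def mem_Collect_eq
      using cv J_diff[of "(S (y + t *\<^sub>R v) - S y) /\<^sub>R t" "S (y + v) - S y"]
        J_sc[of "inverse t" "S (y + t *\<^sub>R v) - S y"] J_diff[of "S (y + t *\<^sub>R v)" "S y"] J_diff[of "S (y + v)" "S y"]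
    proof eventually_elim
      case (elim \<omega>)
      have "J (S (y + t *\<^sub>R v)) \<omega> - J (S y) \<omega> \<le> t * (J (S (y + v)) \<omega> - J (S y) \<omega>)"
        using elim(1) by (simp add: algebra_simps)
      then have "inverse t * (J (S (y + t *\<^sub>R v)) \<omega> - J (S y) \<omega>) \<le> J (S (y + v)) \<omega> - J (S y) \<omega>"
        using t by (simp add: field_simps)
      then show ?case using elim by simp
    qed
  qed
  show ?thesis using Lim_in_closed_set[OF Cn_closed ev _ lim] D_def by simp
qed

lemma boul_C:
  assumes "G \<in> bouligand_sw S y"
  shows "blinfun_apply G v - (S (y + v) - S y) \<in> Cn"
proof -
  obtain xs where xs: "\<And>n. xs n \<in> gateaux_points S" "xs \<longlonglongrightarrow> y"
    and w: "\<And>z. weakly_tendsto (\<lambda>n. blinfun_apply (gateaux S (xs n)) z) (blinfun_apply G z)"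
    using assms unfolding bouligand_sw_def by blast
  show ?thesis
  proof (rule Cn_weak)
    fix n show "blinfun_apply (gateaux S (xs n)) v - (S (xs n + v) - S (xs n)) \<in> Cn" by (rule gat_C[OF xs(1)])
  next
    fix f :: "'y \<Rightarrow>\<^sub>L real"
    have l1: "(\<lambda>n. blinfun_apply f (blinfun_apply (gateaux S (xs n)) v)) \<longlonglongrightarrow> blinfun_apply f (blinfun_apply G v)"
      using w[of v] unfolding weakly_tendsto_def by blast
    have l2: "(\<lambda>n. S (xs n + v)) \<longlonglongrightarrow> S (y + v)" using xs(2) by (intro S_cont tendsto_add tendsto_const)
    have l3: "(\<lambda>n. S (xs n)) \<longlonglongrightarrow> S y" using xs(2) by (rule S_cont)
    have "(\<lambda>n. blinfun_apply f (blinfun_apply (gateaux S (xs n)) v) - (blinfun_apply f (S (xs n + v)) - blinfun_apply f (S (xs n))))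
        \<longlonglongrightarrow> blinfun_apply f (blinfun_apply G v) - (blinfun_apply f (S (y + v)) - blinfun_apply f (S y))"
      by (intro tendsto_diff l1 blinfun.tendsto[OF tendsto_const] l2 l3)
    then show "(\<lambda>n. blinfun_apply f (blinfun_apply (gateaux S (xs n)) v - (S (xs n + v) - S (xs n))))
        \<longlonglongrightarrow> blinfun_apply f (blinfun_apply G v - (S (y + v) - S y))"
      by (simp add: blinfun.diff_right)
  qed
qed

definition Dp :: "'x \<Rightarrow> 'u \<Rightarrow> 'w \<Rightarrow> real" where
  "Dp x z \<omega> = J (S (x + 2 *\<^sub>R E z)) \<omega> - 2 * J (S (x + E z)) \<omega> + J (S x) \<omega>"

lemma Dp_meas: "Dp x z \<in> borel_measurable M"
  unfolding Dp_def using Jmeas by measurable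

lemma Ebound:
  assumes G: "G \<in> bouligand_sw S (x + E z)"
  shows "AE \<omega> in M. \<bar>J (S (x + E z) - S x - blinfun_apply G (E z)) \<omega>\<bar> \<le> Dp x z \<omega>"
proof -
  define y where "y = x + E z"
  have G': "G \<in> bouligand_sw S y" using G y_def by simp
  have y2: "y + E z = x + 2 *\<^sub>R E z" unfolding y_def by (simp add: scaleR_2 algebra_simps)
  have y3: "y + - E z = x" unfolding y_def by simp
  have c1: "blinfun_apply G (E z) - (S (x + 2 *\<^sub>R E z) - S y) \<in> Cn" using boul_C[OF G', of "E z"] y2 by simp
  have c2: "- blinfun_apply G (E z) - (S x - S y) \<in> Cn" using boul_C[OF G', of "- E z"] y3 by (simp add: blinfun.minus_right)
  show ?thesis
    using c1[unfolded Cn_def, simplified] c2[unfolded Cn_def, simplified]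
      J_diff[of "blinfun_apply G (E z)" "S (x + 2 *\<^sub>R E z) - S y"] J_diff[of "S (x + 2 *\<^sub>R E z)" "S y"]
      J_diff[of "- blinfun_apply G (E z)" "S x - S y"] J_neg[of "blinfun_apply G (E z)"] J_diff[of "S x" "S y"]
      J_diff[of "S y - S x" "blinfun_apply G (E z)"] J_diff[of "S y" "S x"]
    unfolding Dp_def y_def[symmetric]
    by eventually_elim (simp add: abs_le_iff)
qed

end



context NS begin

definition phi :: "'x \<Rightarrow> 'x \<Rightarrow> real \<Rightarrow> 'w \<Rightarrow> real" where
  "phi x w t \<omega> = (J (S (x + t *\<^sub>R w)) \<omega> - J (S x) \<omega>) / t"

lemma phi_meas: "phi x w t \<in> borel_measurable M"
  unfolding phi_def using Jmeas by measurable

lemma phi_mono: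
  assumes s: "0 < s" "s \<le> t"
  shows "AE \<omega> in M. phi x w s \<omega> \<le> phi x w t \<omega>"
proof -
  have t: "0 < t" using s by simp
  have v: "(s/t) *\<^sub>R (x + t *\<^sub>R w) + (1 - s/t) *\<^sub>R x = x + s *\<^sub>R w"
    using t by (simp add: algebra_simps)
  have cv: "AE \<omega> in M. J (S (x + s *\<^sub>R w)) \<omega> \<le> (s/t) * J (S (x + t *\<^sub>R w)) \<omega> + (1 - s/t) * J (S x) \<omega>"
    using conv[of "s/t" "x + t *\<^sub>R w" x] s t v by simp
  then show ?thesis
  proof eventually_elim
    case (elim \<omega>)
    define A where "A = J (S (x + s *\<^sub>R w)) \<omega>"
    define B where "B = J (S (x + t *\<^sub>R w)) \<omega>"
    define C0 where "C0 = J (S x) \<omega>"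
    have "A - C0 \<le> (s/t) * (B - C0)" using elim unfolding A_def B_def C0_def by (simp add: algebra_simps)
    then have "(A - C0) / s \<le> (B - C0) / t" using s t by (simp add: field_simps)
    then show ?case unfolding phi_def A_def B_def C0_def .
  qed
qed

lemma dyadic:
  assumes eta: "0 < \<eta>"
  shows "\<exists>\<tau>>0. \<forall>t. 0 < t \<longrightarrow> t < \<tau> \<longrightarrow>
     Lpnorm M q (\<lambda>\<omega>. J (S (x + (2*t) *\<^sub>R w)) \<omega> - 2 * J (S (x + t *\<^sub>R w)) \<omega> + J (S x) \<omega>) \<le> ennreal (\<eta> * t)"
proof -
  obtain C \<epsilon> where C: "C > 0" "\<epsilon> > 0" and L: "\<And>x1 x2. norm (x1 - x) \<le> \<epsilon> \<Longrightarrow> norm (x2 - x) \<le> \<epsilon> \<Longrightarrow>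
            norm (S x1 - S x2) \<le> C * norm (x1 - x2)" using lip[of x] by blast
  define h where "h m = (1/2::real)^m" for m
  have h0: "0 < h m" for m unfolding h_def by simp
  have hmono: "m \<le> m' \<Longrightarrow> h m' \<le> h m" for m m' unfolding h_def by (rule power_decreasing) auto
  define \<beta> where "\<beta> m = (2^m) *\<^sub>R (S (x + h m *\<^sub>R w) - S x)" for m
  have J\<beta>: "AE \<omega> in M. J (\<beta> m) \<omega> = phi x w (h m) \<omega>" for m
    using J_sc[of "2^m" "S (x + h m *\<^sub>R w) - S x"] J_diff[of "S (x + h m *\<^sub>R w)" "S x"]
  proof eventually_elim
    case (elim \<omega>)
    show ?case by (simp only: \<beta>_def phi_def elim(1) elim(2)) (simp add: h_def field_simps)
  qed
  obtain m0 where m0: "(1/2::real)^m0 < \<epsilon> / (norm w + 1)"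
  proof -
    have "0 < \<epsilon> / (norm w + 1)" using C by (intro divide_pos_pos) (auto intro: add_nonneg_pos)
    then show ?thesis using real_arch_pow_inv[of "\<epsilon> / (norm w + 1)" "1/2"] that by auto
  qed
  have hw: "h m * norm w \<le> \<epsilon>" if "m0 \<le> m" for m
  proof -
    have "h m * norm w \<le> h m * (norm w + 1)" using h0[of m] by (intro mult_left_mono) auto
    also have "\<dots> \<le> h m0 * (norm w + 1)" using hmono[OF that] by (intro mult_right_mono) auto
    also have "\<dots> \<le> \<epsilon>"
    proof -
      have pw: "0 < norm w + 1" by (simp add: add_nonneg_pos)
      show ?thesis using m0 unfolding h_def pos_less_divide_eq[OF pw] by simp
    qed
    finally show ?thesis .
  qed
  have \<beta>b: "norm (\<beta> m) \<le> C * norm w" if "m0 \<le> m" for m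
  proof -
    have "norm (S (x + h m *\<^sub>R w) - S x) \<le> C * norm (h m *\<^sub>R w)"
      using L[of "x + h m *\<^sub>R w" x] hw[OF that] h0[of m] C by simp
    then have "norm (\<beta> m) \<le> 2^m * (C * (h m * norm w))" unfolding \<beta>_def using h0[of m] by simp
    also have "\<dots> = C * norm w" unfolding h_def by (simp add: power_one_over)
    finally show ?thesis .
  qed
  define ys where "ys n = \<beta> (m0 + n)" for n
  have "bounded (range ys)" unfolding bounded_iff ys_def using \<beta>b by (intro exI[of _ "C * norm w"]) auto
  then obtain \<sigma> f where \<sigma>: "strict_mono \<sigma>" and fm: "f \<in> borel_measurable M"
    and lim: "(\<lambda>n. Lpnorm M q (\<lambda>\<omega>. J (ys (\<sigma> n)) \<omega> - f \<omega>)) \<longlonglongrightarrow> 0"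
    using Jcomp by blast
  define \<eta>' where "\<eta>' = \<eta> / 16"
  have \<eta>': "0 < \<eta>'" using eta \<eta>'_def by simp
  obtain n0 where n0: "\<And>n. n0 \<le> n \<Longrightarrow> Lpnorm M q (\<lambda>\<omega>. J (ys (\<sigma> n)) \<omega> - f \<omega>) < ennreal \<eta>'"
    using order_tendstoD(2)[OF lim, of "ennreal \<eta>'"] \<eta>' unfolding eventually_sequentially by auto
  define k0 where "k0 = m0 + \<sigma> n0"
  have db: "Lpnorm M q (\<lambda>\<omega>. phi x w (h m) \<omega> - phi x w (h (m+2)) \<omega>) \<le> ennreal (4 * (\<eta>' + \<eta>'))" if m: "k0 \<le> m" for m
  proof -
    define n1 where "n1 = max n0 (m+2)"
    define k1 where "k1 = m0 + \<sigma> n1"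
    have k1: "m + 2 \<le> k1" using seq_suble[OF \<sigma>, of n1] unfolding k1_def n1_def by simp
    have a1: "Lpnorm M q (\<lambda>\<omega>. J (ys (\<sigma> n0)) \<omega> - f \<omega>) \<le> ennreal \<eta>'" using n0[of n0] by simp
    have a2: "Lpnorm M q (\<lambda>\<omega>. f \<omega> - J (ys (\<sigma> n1)) \<omega>) \<le> ennreal \<eta>'"
    proof (rule Lp_mono[OF q _ _ _ less_imp_le[OF n0[of n1]]])
      show "n0 \<le> n1" unfolding n1_def by simp
    qed (use Jmeas fm \<eta>' in auto)
    have a3: "Lpnorm M q (\<lambda>\<omega>. (J (ys (\<sigma> n0)) \<omega> - f \<omega>) + (f \<omega> - J (ys (\<sigma> n1)) \<omega>)) \<le> ennreal (4 * (\<eta>' + \<eta>'))"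
      by (rule Lp_add[OF q _ _ a1 a2]) (use Jmeas fm \<eta>' in auto)
    show ?thesis
    proof (rule Lp_mono[OF q _ _ _ a3])
      show "AE \<omega> in M. \<bar>phi x w (h m) \<omega> - phi x w (h (m + 2)) \<omega>\<bar> \<le> \<bar>J (ys (\<sigma> n0)) \<omega> - f \<omega> + (f \<omega> - J (ys (\<sigma> n1)) \<omega>)\<bar>"
        using J\<beta>[of k0] J\<beta>[of k1] phi_mono[OF h0[of "m+2"] hmono[of m "m+2", OF le_add1], of x w]
          phi_mono[OF h0[of m] hmono[OF m], of x w] phi_mono[OF h0[of k1] hmono[OF k1], of x w]
        unfolding ys_def k0_def[symmetric] k1_def[symmetric] by eventually_elim auto
    qed (use Jmeas fm phi_meas \<eta>' in auto)
  qed
  define \<tau> where "\<tau> = h (k0 + 1)"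
  show ?thesis
  proof (intro exI[of _ \<tau>] conjI allI impI)
    show "0 < \<tau>" using h0 \<tau>_def by simp
  next
    fix t :: real assume t: "0 < t" "t < \<tau>"
    define P where "P k \<longleftrightarrow> h (k+1) \<le> t" for k
    obtain n where n: "(1/2::real)^n < t" using real_arch_pow_inv[of t "1/2"] t by auto
    have Pn: "P n" unfolding P_def h_def using n t by simp
    define k where "k = (LEAST k. P k)"
    have Pk: "P k" unfolding k_def using LeastI[of P n, OF Pn] .
    have k0: "k \<noteq> 0"
    proof
      assume "k = 0"
      then have "h 1 \<le> t" using Pk P_def by simp
      moreover have "\<tau> \<le> h 1" unfolding \<tau>_def by (rule hmono) simp
      ultimately show False using t by simp
    qed
    then obtain m where km: "k = Suc m" by (cases k) auto
    have nPm: "\<not> P m" using not_less_Least[of m P] km k_def by simp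
    have tm: "t < h (m+1)" using nPm P_def by simp
    have m2: "h (m+2) \<le> t" using Pk km P_def by simp
    have mk0: "k0 \<le> m"
    proof (rule ccontr)
      assume "\<not> k0 \<le> m"
      then have "h (k0+1) \<le> h (m+2)" by (intro hmono) simp
      then show False using m2 t \<tau>_def by simp
    qed
    have t2: "2 * t \<le> h m" using tm unfolding h_def by simp
    have tt: "t \<le> 2 * t" and t2pos: "0 < 2 * t" using t by auto
    have eq: "J (S (x + (2*t) *\<^sub>R w)) \<omega> - 2 * J (S (x + t *\<^sub>R w)) \<omega> + J (S x) \<omega> = 2 * t * (phi x w (2*t) \<omega> - phi x w t \<omega>)" for \<omega>
      unfolding phi_def using t by (simp add: field_simps)
    have sc: "Lpnorm M q (\<lambda>\<omega>. (2 * t) * (phi x w (h m) \<omega> - phi x w (h (m+2)) \<omega>)) \<le> ennreal (\<bar>2 * t\<bar> * (4 * (\<eta>' + \<eta>')))"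
      by (rule Lp_scale[OF q _ db[OF mk0]]) (use phi_meas \<eta>' in auto)
    have "Lpnorm M q (\<lambda>\<omega>. J (S (x + (2*t) *\<^sub>R w)) \<omega> - 2 * J (S (x + t *\<^sub>R w)) \<omega> + J (S x) \<omega>) \<le> ennreal (\<bar>2 * t\<bar> * (4 * (\<eta>' + \<eta>')))"
    proof (rule Lp_mono[OF q _ _ _ sc])
      show "AE \<omega> in M. \<bar>J (S (x + (2*t) *\<^sub>R w)) \<omega> - 2 * J (S (x + t *\<^sub>R w)) \<omega> + J (S x) \<omega>\<bar> \<le> \<bar>2 * t * (phi x w (h m) \<omega> - phi x w (h (m + 2)) \<omega>)\<bar>"
        using phi_mono[OF h0 m2, of x w] phi_mono[OF t(1) tt, of x w] phi_mono[OF t2pos t2, of x w]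
        unfolding eq by eventually_elim (auto simp: abs_mult intro!: mult_left_mono)
    qed (use Jmeas phi_meas t \<eta>' in auto)
    also have "\<bar>2 * t\<bar> * (4 * (\<eta>' + \<eta>')) = \<eta> * t" using t \<eta>'_def by simp
    finally show "Lpnorm M q (\<lambda>\<omega>. J (S (x + (2*t) *\<^sub>R w)) \<omega> - 2 * J (S (x + t *\<^sub>R w)) \<omega> + J (S x) \<omega>) \<le> ennreal (\<eta> * t)" .
  qed
qed

end



context NS begin

lemma Lr_bound: "\<exists>K. eventually (\<lambda>z. Lpnorm M r (Dp x z) \<le> ennreal (K * norm z)) (at 0)"
proof -
  obtain C \<epsilon> where C: "C > 0" "\<epsilon> > 0" and L: "\<And>x1 z. norm (x1 - x) \<le> \<epsilon> \<Longrightarrow> norm z \<le> \<epsilon> \<Longrightarrow>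
            Lpnorm M r (J (S (x1 + E z) - S x1)) \<le> ennreal (C * norm z)" using lip[of x] by blast
  obtain KE where KE: "KE > 0" "\<And>z. norm (E z) \<le> norm z * KE" using bounded_linear.pos_bounded[OF Elin] by blast
  have "eventually (\<lambda>z. Lpnorm M r (Dp x z) \<le> ennreal (8 * C * norm z)) (at 0)"
    unfolding eventually_at
  proof (intro exI[of _ "min \<epsilon> (\<epsilon> / KE)"] conjI ballI impI)
    show "0 < min \<epsilon> (\<epsilon> / KE)" using C KE by simp
  next
    fix z :: 'u assume z: "z \<noteq> 0 \<and> dist z 0 < min \<epsilon> (\<epsilon> / KE)"
    have nz: "norm z \<le> \<epsilon>" using z by simp
    have nEz: "norm (E z) \<le> \<epsilon>"
    proof -
      have "norm z * KE \<le> \<epsilon>" using z KE by (simp add: field_simps)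
      then show ?thesis using KE(2)[of z] by simp
    qed
    have p1: "Lpnorm M r (J (S (x + E z + E z) - S (x + E z))) \<le> ennreal (C * norm z)"
      using L[of "x + E z" z] nz nEz by simp
    have Em: "E (- z) = - E z" using linear_neg[OF bounded_linear.linear[OF Elin]] by metis
    have p2: "Lpnorm M r (J (S x - S (x + E z))) \<le> ennreal (C * norm z)"
      using L[of "x + E z" "- z"] nz nEz Em by simp
    have a: "Lpnorm M r (\<lambda>\<omega>. J (S (x + E z + E z) - S (x + E z)) \<omega> + J (S x - S (x + E z)) \<omega>) \<le> ennreal (4 * (C * norm z + C * norm z))"
      by (rule Lp_add[OF r _ _ p1 p2]) (use Jmeas C in auto)
    have xx: "x + E z + E z = x + 2 *\<^sub>R E z" by (simp add: scaleR_2 algebra_simps)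
    have "Lpnorm M r (Dp x z) \<le> ennreal (4 * (C * norm z + C * norm z))"
    proof (rule Lp_mono[OF r _ Dp_meas _ a])
      show "AE \<omega> in M. \<bar>Dp x z \<omega>\<bar> \<le> \<bar>J (S (x + E z + E z) - S (x + E z)) \<omega> + J (S x - S (x + E z)) \<omega>\<bar>"
        using J_diff[of "S (x + E z + E z)" "S (x + E z)"] J_diff[of "S x" "S (x + E z)"]
        unfolding Dp_def xx by eventually_elim simp
    qed (use Jmeas C in auto)
    then show "Lpnorm M r (Dp x z) \<le> ennreal (8 * C * norm z)" by (simp add: algebra_simps)
  qed
  then show ?thesis by blast
qed

lemma Lq_small:
  assumes eta: "0 < \<eta>"
  shows "eventually (\<lambda>z. Lpnorm M q (Dp x z) \<le> ennreal (\<eta> * norm z)) (at 0)"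
proof (rule ccontr)
  define P where "P z \<longleftrightarrow> Lpnorm M q (Dp x z) \<le> ennreal (\<eta> * norm z)" for z
  assume "\<not> eventually (\<lambda>z. Lpnorm M q (Dp x z) \<le> ennreal (\<eta> * norm z)) (at 0)"
  then have nev: "\<forall>d>0. \<exists>z. z \<noteq> 0 \<and> norm z < d \<and> \<not> P z"
    unfolding eventually_at P_def by (auto simp: dist_norm)
  have "\<forall>n. \<exists>z. z \<noteq> 0 \<and> norm z < inverse (real (Suc n)) \<and> \<not> P z"
    using nev by simp
  then obtain zs where zs: "\<And>n. zs n \<noteq> 0" "\<And>n. norm (zs n) < inverse (real (Suc n))" "\<And>n. \<not> P (zs n)"
    by metis
  define ws where "ws n = (1 / norm (zs n)) *\<^sub>R zs n" for n
  have nws: "norm (ws n) = 1" for n unfolding ws_def using zs(1)[of n] by simp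
  have "bounded (range ws)" unfolding bounded_iff using nws by (intro exI[of _ 1]) auto
  then obtain \<sigma> w' where \<sigma>: "strict_mono \<sigma>" and ew: "(\<lambda>n. E (ws (\<sigma> n))) \<longlonglongrightarrow> w'"
    using Ecomp by blast
  define tn where "tn n = norm (zs (\<sigma> n))" for n
  define en where "en n = E (ws (\<sigma> n))" for n
  have tn0: "0 < tn n" for n unfolding tn_def using zs(1) by simp
  have Ez: "E (zs (\<sigma> n)) = tn n *\<^sub>R en n" for n
  proof -
    have "zs (\<sigma> n) = tn n *\<^sub>R ws (\<sigma> n)" unfolding tn_def ws_def using zs(1)[of "\<sigma> n"] by simp
    then show ?thesis unfolding en_def using linear_scale[OF bounded_linear.linear[OF Elin]] by metis
  qed
  have tnlim: "tn \<longlonglongrightarrow> 0"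
  proof (rule Lim_null_comparison[where g = "\<lambda>n. inverse (real (Suc n))"])
    show "eventually (\<lambda>n. norm (tn n) \<le> inverse (real (Suc n))) sequentially"
    proof (intro always_eventually allI)
      fix n
      have "norm (tn n) < inverse (real (Suc (\<sigma> n)))" unfolding tn_def using zs(2) by simp
      also have "\<dots> \<le> inverse (real (Suc n))" using seq_suble[OF \<sigma>, of n] by (simp add: field_simps)
      finally show "norm (tn n) \<le> inverse (real (Suc n))" by simp
    qed
  qed (rule LIMSEQ_inverse_real_of_nat)
  obtain C \<epsilon> where C: "C > 0" "\<epsilon> > 0" and L: "\<And>x1 x2. norm (x1 - x) \<le> \<epsilon> \<Longrightarrow> norm (x2 - x) \<le> \<epsilon> \<Longrightarrow>
            norm (S x1 - S x2) \<le> C * norm (x1 - x2)" using lip[of x] by blast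
  define \<eta>' where "\<eta>' = \<eta> / 32"
  obtain \<tau> where \<tau>: "\<tau> > 0" and Dd: "\<And>t. 0 < t \<Longrightarrow> t < \<tau> \<Longrightarrow>
     Lpnorm M q (\<lambda>\<omega>. J (S (x + (2*t) *\<^sub>R w')) \<omega> - 2 * J (S (x + t *\<^sub>R w')) \<omega> + J (S x) \<omega>) \<le> ennreal (\<eta>' * t)"
    using dyadic[of \<eta>' x w'] eta \<eta>'_def by auto
  define \<delta>1 where "\<delta>1 = min 1 (\<eta> / (80 * CJ * C))"
  have \<delta>1: "0 < \<delta>1" unfolding \<delta>1_def using eta CJ C by simp
  have ev1: "eventually (\<lambda>n. tn n < \<tau>) sequentially" using order_tendstoD(2)[OF tnlim \<tau>] .
  have ev2: "eventually (\<lambda>n. norm (en n - w') < \<delta>1) sequentially"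
  proof -
    have "(\<lambda>n. norm (en n - w')) \<longlonglongrightarrow> 0" using ew unfolding en_def
      by (intro tendsto_norm_zero) (simp add: LIM_zero_iff)
    then show ?thesis using order_tendstoD(2)[OF _ \<delta>1] by blast
  qed
  have ev3: "eventually (\<lambda>n. 2 * tn n * (norm w' + 1) < \<epsilon>) sequentially"
  proof -
    have "(\<lambda>n. 2 * tn n * (norm w' + 1)) \<longlonglongrightarrow> 2 * 0 * (norm w' + 1)"
      by (intro tendsto_mult tendsto_const tnlim)
    then show ?thesis using order_tendstoD(2)[OF _ C(2)] by simp
  qed
  have "eventually (\<lambda>n. P (zs (\<sigma> n))) sequentially"
    using ev1 ev2 ev3
  proof eventually_elim
    case (elim n)
    define t where "t = tn n"
    define e where "e = en n"
    define z where "z = zs (\<sigma> n)"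
    have t: "0 < t" "t < \<tau>" using tn0 elim t_def by auto
    have e: "norm (e - w') < \<delta>1" using elim e_def by simp
    have ne: "norm e \<le> norm w' + 1"
    proof -
      have "norm e \<le> norm w' + norm (e - w')" by (metis add_diff_cancel_left' norm_triangle_sub add.commute)
      then show ?thesis using e \<delta>1_def by simp
    qed
    have small: "2 * t * (norm w' + 1) < \<epsilon>" using elim t_def by simp
    have Ezt: "E z = t *\<^sub>R e" unfolding z_def t_def e_def by (rule Ez)
    have nzt: "norm z = t" unfolding z_def t_def tn_def ..
    have X: "CJ * C * norm (e - w') \<le> \<eta> / 80"
    proof -
      have "CJ * C * norm (e - w') \<le> CJ * C * (\<eta> / (80 * CJ * C))"
        using e \<delta>1_def CJ C by (intro mult_left_mono) auto
      then show ?thesis using CJ C by simp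
    qed
    have lipd: "norm (S (x + s *\<^sub>R e) - S (x + s *\<^sub>R w')) \<le> C * (s * norm (e - w'))"
      if s: "0 < s" "s \<le> 2 * t" for s
    proof -
      have "s * norm e \<le> 2 * t * (norm w' + 1)" using s ne by (intro mult_mono) auto
      moreover have "s * norm w' \<le> 2 * t * (norm w' + 1)" using s by (intro mult_mono) auto
      ultimately have "norm (s *\<^sub>R e) \<le> \<epsilon>" "norm (s *\<^sub>R w') \<le> \<epsilon>" using small s by auto
      then have "norm (S (x + s *\<^sub>R e) - S (x + s *\<^sub>R w')) \<le> C * norm (s *\<^sub>R e - s *\<^sub>R w')"
        using L[of "x + s *\<^sub>R e" "x + s *\<^sub>R w'"] by simp
      also have "\<dots> = C * (s * norm (e - w'))" using s by (simp add: scaleR_diff_right[symmetric])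
      finally show ?thesis .
    qed
    define fA where "fA \<omega> = J (S (x + (2*t) *\<^sub>R e)) \<omega> - J (S (x + (2*t) *\<^sub>R w')) \<omega>" for \<omega>
    define fB where "fB \<omega> = (-2) * (J (S (x + t *\<^sub>R e)) \<omega> - J (S (x + t *\<^sub>R w')) \<omega>)" for \<omega>
    define fD where "fD \<omega> = J (S (x + (2*t) *\<^sub>R w')) \<omega> - 2 * J (S (x + t *\<^sub>R w')) \<omega> + J (S x) \<omega>" for \<omega>
    have mA: "fA \<in> borel_measurable M" and mB: "fB \<in> borel_measurable M" and mD: "fD \<in> borel_measurable M"
      unfolding fA_def fB_def fD_def using Jmeas by measurable
    define a where "a = CJ * (C * ((2*t) * norm (e - w')))"
    define b where "b = \<bar>-2\<bar> * (CJ * (C * (t * norm (e - w'))))"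
    have a0: "0 \<le> a" unfolding a_def using CJ C t by simp
    have b0: "0 \<le> b" unfolding b_def using CJ C t by simp
    have LA: "Lpnorm M q fA \<le> ennreal a"
    proof -
      have "Lpnorm M q fA \<le> ennreal (CJ * norm (S (x + (2*t) *\<^sub>R e) - S (x + (2*t) *\<^sub>R w')))"
        unfolding fA_def by (rule Jdist)
      also have "\<dots> \<le> ennreal a" unfolding a_def using lipd[of "2*t"] t CJ
        by (intro ennreal_leI mult_left_mono) auto
      finally show ?thesis .
    qed
    have LB: "Lpnorm M q fB \<le> ennreal b"
    proof -
      have "Lpnorm M q (\<lambda>\<omega>. J (S (x + t *\<^sub>R e)) \<omega> - J (S (x + t *\<^sub>R w')) \<omega>) \<le> ennreal (CJ * norm (S (x + t *\<^sub>R e) - S (x + t *\<^sub>R w')))"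
        by (rule Jdist)
      also have "\<dots> \<le> ennreal (CJ * (C * (t * norm (e - w'))))" using lipd[of t] t CJ
        by (intro ennreal_leI mult_left_mono) auto
      finally have hB: "Lpnorm M q (\<lambda>\<omega>. J (S (x + t *\<^sub>R e)) \<omega> - J (S (x + t *\<^sub>R w')) \<omega>) \<le> ennreal (CJ * (C * (t * norm (e - w'))))" .
      show ?thesis unfolding fB_def b_def
        by (rule Lp_scale[OF q _ hB]) (use Jmeas CJ C t in auto)
    qed
    have LD: "Lpnorm M q fD \<le> ennreal (\<eta>' * t)" unfolding fD_def using Dd t by simp
    have LBD: "Lpnorm M q (\<lambda>\<omega>. fB \<omega> + fD \<omega>) \<le> ennreal (4 * (b + \<eta>' * t))"
      by (rule Lp_add[OF q mB mD LB LD b0]) (use t eta \<eta>'_def in simp)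
    have LABD: "Lpnorm M q (\<lambda>\<omega>. fA \<omega> + (fB \<omega> + fD \<omega>)) \<le> ennreal (4 * (a + 4 * (b + \<eta>' * t)))"
      by (rule Lp_add[OF q mA _ LA LBD a0]) (use mB mD t eta \<eta>'_def b0 in auto)
    have eqD: "Dp x z \<omega> = fA \<omega> + (fB \<omega> + fD \<omega>)" for \<omega>
      unfolding Dp_def fA_def fB_def fD_def Ezt by (simp add: algebra_simps)
    have "Lpnorm M q (Dp x z) \<le> ennreal (4 * (a + 4 * (b + \<eta>' * t)))"
      using LABD unfolding eqD[abs_def] by simp
    also have "\<dots> \<le> ennreal (\<eta> * t)"
    proof (rule ennreal_leI)
      have "a \<le> 2 * t * (\<eta> / 80)" unfolding a_def using X t
        by (simp add: mult.assoc mult.left_commute)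
      moreover have "b \<le> 2 * t * (\<eta> / 80)" unfolding b_def using X t
        by (simp add: mult.assoc mult.left_commute)
      ultimately show "4 * (a + 4 * (b + \<eta>' * t)) \<le> \<eta> * t" unfolding \<eta>'_def by (simp add: algebra_simps)
    qed
    finally show ?case unfolding P_def z_def nzt[unfolded z_def] t_def .
  qed
  then show False using zs(3) by (simp add: eventually_sequentially)
qed

end



lemma ennreal_tendsto_0I:
  assumes "\<And>e. 0 < e \<Longrightarrow> eventually (\<lambda>x. f x \<le> ennreal e) F"
  shows "(f \<longlongrightarrow> (0::ennreal)) F"
proof (rule order_tendstoI)
  fix a :: ennreal assume "a < 0" then show "eventually (\<lambda>x. a < f x) F" by simp
next
  fix a :: ennreal assume a: "0 < a"
  obtain b :: ennreal where b: "0 < b" "b < a" using dense[OF a] by blast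
  have bt: "b < top" using b(2) top_greatest[of a] by (rule order_less_le_trans)
  define e where "e = enn2real b"
  have e: "0 < e" "ennreal e = b" using b bt by (auto simp: e_def enn2real_positive_iff)
  show "eventually (\<lambda>x. f x < a) F"
    using assms[OF e(1)] by eventually_elim (use e b in auto)
qed

context NS begin

lemma key_p:
  assumes p: "p = q \<or> p \<in> {min q r <..< max q r}" and e: "0 < \<epsilon>"
  shows "eventually (\<lambda>z. Lpnorm M p (Dp x z) \<le> ennreal (\<epsilon> * norm z)) (at 0)"
proof (cases "p = q")
  case True
  then show ?thesis using Lq_small[OF e] by simp
next
  case False
  then have pin: "min q r < p" "p < max q r" using p by auto
  obtain K where K: "eventually (\<lambda>z. Lpnorm M r (Dp x z) \<le> ennreal (K * norm z)) (at 0)" using Lr_bound by blast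
  define K' where "K' = max K 0"
  have K'0: "0 \<le> K'" unfolding K'_def by simp
  obtain \<delta> where d: "\<delta> > 0" and I: "\<And>f. f \<in> borel_measurable M \<Longrightarrow> Lpnorm M r f \<le> ennreal K' \<Longrightarrow>
            Lpnorm M q f \<le> ennreal \<delta> \<Longrightarrow> Lpnorm M p f \<le> ennreal \<epsilon>"
    using Lp_interp[OF q r pin K'0 e, of M] by blast
  have nz: "eventually (\<lambda>z::'u. z \<noteq> 0) (at 0)" unfolding eventually_at by (intro exI[of _ 1]) auto
  show ?thesis
    using K Lq_small[OF d, of x] nz
  proof eventually_elim
    case (elim z)
    define t where "t = norm z"
    have t: "0 < t" using elim t_def by simp
    define f where "f \<omega> = (1/t) * Dp x z \<omega>" for \<omega>
    have fm: "f \<in> borel_measurable M" unfolding f_def using Dp_meas by measurable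
    have Kr: "Lpnorm M r (Dp x z) \<le> ennreal (K' * t)"
    proof -
      have "K * t \<le> K' * t" unfolding K'_def using t by (intro mult_right_mono) auto
      then have "ennreal (K * t) \<le> ennreal (K' * t)" by (rule ennreal_leI)
      then show ?thesis using elim(1) t_def by (metis order.trans)
    qed
    have fr: "Lpnorm M r f \<le> ennreal K'"
      using Lp_scale[OF r Dp_meas Kr, of "1/t"] K'0 t unfolding f_def by simp
    have fq: "Lpnorm M q f \<le> ennreal \<delta>"
      using Lp_scale[OF q Dp_meas elim(2)[folded t_def], of "1/t"] d t unfolding f_def by simp
    have fp: "Lpnorm M p f \<le> ennreal \<epsilon>" by (rule I[OF fm fr fq])
    have p1: "1 \<le> p" using pin q r by (auto simp: min_def split: if_splits)
    have "Lpnorm M p (\<lambda>\<omega>. t * f \<omega>) \<le> ennreal (\<bar>t\<bar> * \<epsilon>)" by (rule Lp_scale[OF p1 fm fp]) (use e in simp)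
    moreover have "(\<lambda>\<omega>. t * f \<omega>) = Dp x z" using t unfolding f_def by auto
    ultimately show ?case using t t_def by (simp add: mult.commute)
  qed
qed

lemma main_loc:
  assumes p: "p = q \<or> p \<in> {min q r <..< max q r}"
  shows "((\<lambda>z. (SUP G \<in> bouligand_sw S (x + E z).
              Lpnorm M p (J (S (x + E z) - S x - blinfun_apply G (E z))) / ennreal (norm z)))
            \<longlongrightarrow> 0) (at 0)"
proof (rule ennreal_tendsto_0I)
  fix e :: real assume e: "0 < e"
  have p1: "1 \<le> p" using p q r by (auto simp: min_def split: if_splits)
  have nz: "eventually (\<lambda>z::'u. z \<noteq> 0) (at 0)" unfolding eventually_at by (intro exI[of _ 1]) auto
  show "eventually (\<lambda>z. (SUP G \<in> bouligand_sw S (x + E z).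
              Lpnorm M p (J (S (x + E z) - S x - blinfun_apply G (E z))) / ennreal (norm z)) \<le> ennreal e) (at 0)"
    using key_p[OF p e, of x] nz
  proof eventually_elim
    case (elim z)
    have t: "0 < norm z" using elim by simp
    show ?case
    proof (rule SUP_least)
      fix G assume G: "G \<in> bouligand_sw S (x + E z)"
      have "Lpnorm M p (J (S (x + E z) - S x - blinfun_apply G (E z))) \<le> ennreal (e * norm z)"
      proof (rule Lp_mono[OF p1 Dp_meas Jmeas _ elim(1)])
        show "AE \<omega> in M. \<bar>J (S (x + E z) - S x - blinfun_apply G (E z)) \<omega>\<bar> \<le> \<bar>Dp x z \<omega>\<bar>"
          using Ebound[OF G] by eventually_elim simp
      qed (use e in simp)
      then have "Lpnorm M p (J (S (x + E z) - S x - blinfun_apply G (E z))) / ennreal (norm z) \<le> ennreal (e * norm z) / ennreal (norm z)"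
        by (rule divide_right_mono_ennreal)
      also have "\<dots> = ennreal e" using t e by (simp add: divide_ennreal)
      finally show "Lpnorm M p (J (S (x + E z) - S x - blinfun_apply G (E z))) / ennreal (norm z) \<le> ennreal e" .
    qed
  qed
qed

end



theorem mainTheorem7:
  fixes M :: "'w measure"
    and J :: "'y::banach \<Rightarrow> 'w \<Rightarrow> real"
    and E :: "'u::banach \<Rightarrow> 'x::banach"
    and S :: "'x \<Rightarrow> 'y"
    and p q r :: ennreal
  assumes complete: "complete_measure M"
    and q: "1 \<le> q" and r: "1 \<le> r"
    and Y_sep: "separable_nv TYPE('y)" and Y_refl: "reflexive_nv TYPE('y)"
    and Y_emb: "compact_Lp_embedding M q J"
    and X_sep: "separable_nv TYPE('x)"
    and U_refl: "reflexive_nv TYPE('u)"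
    and U_emb: "compact_embedding E"
    and S_convex: "\<And>x1 x2 lam. 0 \<le> lam \<Longrightarrow> lam \<le> 1 \<Longrightarrow>
        AE \<omega> in M. J (S (lam *\<^sub>R x1 + (1 - lam) *\<^sub>R x2)) \<omega> \<le> lam * J (S x1) \<omega> + (1 - lam) * J (S x2) \<omega>"
    and S_lip: "\<And>x. \<exists>C>0. \<exists>\<epsilon>>0.
        (\<forall>x1 x2. norm (x1 - x) \<le> \<epsilon> \<longrightarrow> norm (x2 - x) \<le> \<epsilon> \<longrightarrow>
            norm (S x1 - S x2) \<le> C * norm (x1 - x2)) \<and>
        (\<forall>x1 z. norm (x1 - x) \<le> \<epsilon> \<longrightarrow> norm z \<le> \<epsilon> \<longrightarrow>
            Lpnorm M r (J (S (x1 + E z) - S x1)) \<le> ennreal (C * norm z))"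
    and p: "p = q \<or> p \<in> {min q r <..< max q r}"
  shows "\<forall>x. ((\<lambda>z. (SUP G \<in> bouligand_sw S (x + E z).
              Lpnorm M p (J (S (x + E z) - S x - blinfun_apply G (E z))) / ennreal (norm z)))
            \<longlongrightarrow> 0) (at 0)"
proof -
  have Yd: "(\<forall>y. J y \<in> borel_measurable M) \<and>
     (\<forall>(a::real) (y::'y) y'. AE \<omega> in M. J (a *\<^sub>R y + y') \<omega> = a * J y \<omega> + J y' \<omega>) \<and>
     (\<forall>y. (AE \<omega> in M. J y \<omega> = 0) \<longrightarrow> y = 0) \<and>
     (\<exists>C::real. \<forall>y. Lpnorm M q (J y) \<le> ennreal (C * norm y)) \<and>
     (\<forall>ys::nat \<Rightarrow> 'y. bounded (range ys) \<longrightarrow>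
        (\<exists>(\<sigma>::nat \<Rightarrow> nat) (f::'w \<Rightarrow> real). strict_mono \<sigma> \<and> f \<in> borel_measurable M \<and> Lpnorm M q f < \<infinity> \<and>
               (\<lambda>n. Lpnorm M q (\<lambda>\<omega>. J (ys (\<sigma> n)) \<omega> - f \<omega>)) \<longlonglongrightarrow> 0))"
    using Y_emb unfolding compact_Lp_embedding_def .
  obtain C0 where C0: "\<And>y. Lpnorm M q (J y) \<le> ennreal (C0 * norm y)" using Yd by blast
  define CJ where "CJ = max C0 1"
  have Jbd: "Lpnorm M q (J y) \<le> ennreal (CJ * norm y)" for y
  proof -
    have "C0 * norm y \<le> CJ * norm y" unfolding CJ_def by (intro mult_right_mono) auto
    then show ?thesis using C0[of y] by (metis ennreal_leI order.trans)
  qed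
  have Ud: "bounded_linear E \<and> inj E \<and>
     (\<forall>us::nat \<Rightarrow> 'u. bounded (range us) \<longrightarrow> (\<exists>(\<sigma>::nat \<Rightarrow> nat) (l::'x). strict_mono \<sigma> \<and> (\<lambda>n. E (us (\<sigma> n))) \<longlonglongrightarrow> l))"
    using U_emb unfolding compact_embedding_def .
  have a1: "\<And>y. J y \<in> borel_measurable M" using Yd by blast
  have a2: "\<And>a y y'. AE \<omega> in M. J (a *\<^sub>R y + y') \<omega> = a * J y \<omega> + J y' \<omega>" using Yd by blast
  have a3: "0 < CJ" unfolding CJ_def by simp
  have a5: "\<And>ys::nat \<Rightarrow> 'y. bounded (range ys) \<Longrightarrow>
        (\<exists>(\<sigma>::nat \<Rightarrow> nat) (f::'w \<Rightarrow> real). strict_mono \<sigma> \<and> f \<in> borel_measurable M \<and> Lpnorm M q f < \<infinity> \<and>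
               (\<lambda>n. Lpnorm M q (\<lambda>\<omega>. J (ys (\<sigma> n)) \<omega> - f \<omega>)) \<longlonglongrightarrow> 0)" using Yd by blast
  have a6: "bounded_linear E" using Ud by blast
  have a7: "\<And>us::nat \<Rightarrow> 'u. bounded (range us) \<Longrightarrow> (\<exists>(\<sigma>::nat \<Rightarrow> nat) (l::'x). strict_mono \<sigma> \<and> (\<lambda>n. E (us (\<sigma> n))) \<longlonglongrightarrow> l)"
    using Ud by blast
  interpret NS M J E S q r CJ
    by (rule NS.intro[OF q r a1 a2 a3 Jbd a5 a6 a7 S_convex S_lip])
  show ?thesis using main_loc[OF p] by blast
qed


end
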